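(* Let $G$ be a group satisfying the property $\mathsf{FM}$ and $\nu$ a conjugation-invariant pseudo-norm on $G$. Then $A_\nu$, with addition $[\mathtt{g}]+[\mathtt{h}]=[\mathtt{g}\cdot\mathtt{h}]$ and scalar multiplication $\lambda[\mathtt{g}]=[\mathtt{g}^{(\lambda)}]$, is a real vector space, and the function $\|[\mathtt{g}]\|_\nu=\|\mathtt{g}\|_\nu$ is a norm on it; i.e. $(A_\nu,\|\cdot\|_\nu)$ is a normed vector space.
   Context: A conjugation-invariant pseudo-norm on a group $G$ is a function $\nu\colon G\to\mathbb{R}_{\ge0}$ with $\nu(1)=0$, $\nu(f)=\nu(f^{-1})$, $\nu(fg)\le\nu(f)+\nu(g)$ and $\nu(gfg^{-1})=\nu(f)$ for all $f,g\in G$. Property $\mathsf{FM}$: for a subgroup $H\le G$, let $\nu_H(f)$ be the minimal $k$ such that $f=g_1h_1g_1^{-1}\cdots g_kh_kg_k^{-1}$ ($g_i\in G,h_i\in H$), $\infty$ if none; for $K\subset G$ let $\mathrm{D}^f_H(K)$ be the set of $h_0\in G$ such that for all $g_1,\dots,g_k\in G$ there is $h\in G$ with every element of $hh_0h^{-1}K(hh_0h^{-1})^{-1}$ commuting with every element of $\bigcup_i g_iHg_i^{-1}$. $(G,H)$ satisfies $\mathsf{FM}$ if $\nu_H<\infty$ on $G$ and $\mathrm{D}^f_H(h_1Hh_1^{-1}\cup\dots\cup h_kHh_k^{-1})\ne\emptyset$ for all $h_1,\dots,h_k\in G$; $G$ satisfies $\mathsf{FM}$ if some $(G,H)$ does.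 $A_G=\coprod_{k\ge0}(G\times\mathbb{R})^k$, whose elements are written as formal words $g_1^{s_1}\cdots g_k^{s_k}$, with empty word $1$. For $\mathtt{g}=g_1^{s_1}\cdots g_k^{s_k}$, $\mathtt{h}=h_1^{t_1}\cdots h_l^{t_l}$, $\lambda\in\mathbb{R}$: $\mathtt{g}\cdot\mathtt{h}$ is concatenation, $\bar{\mathtt{g}}=g_k^{-s_k}\cdots g_1^{-s_1}$, $\mathtt{g}^{(\lambda)}=g_1^{\lambda s_1}\cdots g_k^{\lambda s_k}$. $\|\mathtt{g}\|_\nu=\lim_{n\to\infty}\frac1n\nu(g_1^{[s_1n]}\cdots g_k^{[s_kn]})$ ($[\cdot]$ integer part), $\|1\|_\nu=0$. $\mathtt{g}\sim\mathtt{h}$ iff $\|\mathtt{g}\cdot\bar{\mathtt{h}}\|_\nu=0$; $A_\nu=A_G/\sim$. *)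

theory Defs
  imports "HOL-Algebra.Group" "HOL-Analysis.Analysis"
begin

definition conj_inv_pseudo_norm :: "('a, 'b) monoid_scheme \<Rightarrow> ('a \<Rightarrow> real) \<Rightarrow> bool" where
  "conj_inv_pseudo_norm G \<nu> \<longleftrightarrow>
     \<nu> \<one>\<^bsub>G\<^esub> = 0 \<and>
     (\<forall>f\<in>carrier G. \<nu> f \<ge> 0) \<and>
     (\<forall>f\<in>carrier G. \<nu> (inv\<^bsub>G\<^esub> f) = \<nu> f) \<and>
     (\<forall>f\<in>carrier G. \<forall>g\<in>carrier G. \<nu> (f \<otimes>\<^bsub>G\<^esub> g) \<le> \<nu> f + \<nu> g) \<and>
     (\<forall>f\<in>carrier G. \<forall>g\<in>carrier G. \<nu> (g \<otimes>\<^bsub>G\<^esub> f \<otimes>\<^bsub>G\<^esub> inv\<^bsub>G\<^esub> g) = \<nu> f)"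

definition conj_set :: "('a, 'b) monoid_scheme \<Rightarrow> 'a \<Rightarrow> 'a set \<Rightarrow> 'a set" where
  "conj_set G g K = {g \<otimes>\<^bsub>G\<^esub> k \<otimes>\<^bsub>G\<^esub> inv\<^bsub>G\<^esub> g | k. k \<in> K}"

text \<open>\<open>\<nu>_H(f) < \<infinity>\<close>: \<open>f\<close> is a finite product of conjugates of elements of \<open>H\<close>.\<close>
definition nuH_finite :: "('a, 'b) monoid_scheme \<Rightarrow> 'a set \<Rightarrow> 'a \<Rightarrow> bool" where
  "nuH_finite G H f \<longleftrightarrow>
     (\<exists>xs. set xs \<subseteq> (\<Union>g\<in>carrier G. conj_set G g H) \<and> f = foldr (\<otimes>\<^bsub>G\<^esub>) xs \<one>\<^bsub>G\<^esub>)"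

definition commute_sets :: "('a, 'b) monoid_scheme \<Rightarrow> 'a set \<Rightarrow> 'a set \<Rightarrow> bool" where
  "commute_sets G A B \<longleftrightarrow> (\<forall>a\<in>A. \<forall>b\<in>B. a \<otimes>\<^bsub>G\<^esub> b = b \<otimes>\<^bsub>G\<^esub> a)"

definition Df :: "('a, 'b) monoid_scheme \<Rightarrow> 'a set \<Rightarrow> 'a set \<Rightarrow> 'a set" where
  "Df G H K = {h0 \<in> carrier G. \<forall>gs. set gs \<subseteq> carrier G \<longrightarrow>
      (\<exists>h\<in>carrier G. commute_sets G
          (conj_set G (h \<otimes>\<^bsub>G\<^esub> h0 \<otimes>\<^bsub>G\<^esub> inv\<^bsub>G\<^esub> h) K)
          (\<Union>g\<in>set gs. conj_set G g H))}"

definition FM_pair :: "('a, 'b) monoid_scheme \<Rightarrow> 'a set \<Rightarrow> bool" where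
  "FM_pair G H \<longleftrightarrow> subgroup H G \<and>
     (\<forall>f\<in>carrier G. nuH_finite G H f) \<and>
     (\<forall>hs. set hs \<subseteq> carrier G \<longrightarrow> Df G H (\<Union>h\<in>set hs. conj_set G h H) \<noteq> {})"

definition FM :: "('a, 'b) monoid_scheme \<Rightarrow> bool" where
  "FM G \<longleftrightarrow> (\<exists>H. FM_pair G H)"

text \<open>A word \<open>g_1^{s_1}\<cdots>g_k^{s_k}\<close> is the list \<open>[(g_1,s_1),\<dots>,(g_k,s_k)]\<close>;
  concatenation is \<open>@\<close>, the empty word is \<open>[]\<close>.\<close>
type_synonym 'a word = "('a \<times> real) list"

definition words :: "('a, 'b) monoid_scheme \<Rightarrow> 'a word set" where
  "words G = {w. set (map fst w) \<subseteq> carrier G}"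

definition wbar :: "'a word \<Rightarrow> 'a word" where
  "wbar w = rev (map (\<lambda>(g, s). (g, - s)) w)"

definition wscale :: "real \<Rightarrow> 'a word \<Rightarrow> 'a word" where
  "wscale c w = map (\<lambda>(g, s). (g, c * s)) w"

definition word_eval :: "('a, 'b) monoid_scheme \<Rightarrow> 'a word \<Rightarrow> nat \<Rightarrow> 'a" where
  "word_eval G w n =
     foldr (\<lambda>(g, s) acc. (g [^]\<^bsub>G\<^esub> (\<lfloor>s * real n\<rfloor>)) \<otimes>\<^bsub>G\<^esub> acc) w \<one>\<^bsub>G\<^esub>"

definition word_seq :: "('a, 'b) monoid_scheme \<Rightarrow> ('a \<Rightarrow> real) \<Rightarrow> 'a word \<Rightarrow> nat \<Rightarrow> real" where
  "word_seq G \<nu> w n = \<nu> (word_eval G w n) / real n"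

definition wnorm :: "('a, 'b) monoid_scheme \<Rightarrow> ('a \<Rightarrow> real) \<Rightarrow> 'a word \<Rightarrow> real" where
  "wnorm G \<nu> w = (if w = [] then 0 else lim (word_seq G \<nu> w))"

definition wrel :: "('a, 'b) monoid_scheme \<Rightarrow> ('a \<Rightarrow> real) \<Rightarrow> ('a word \<times> 'a word) set" where
  "wrel G \<nu> = {(g, h). g \<in> words G \<and> h \<in> words G \<and> wnorm G \<nu> (g @ wbar h) = 0}"

definition Anu :: "('a, 'b) monoid_scheme \<Rightarrow> ('a \<Rightarrow> real) \<Rightarrow> 'a word set set" where
  "Anu G \<nu> = words G // wrel G \<nu>"

definition rep :: "'a word set \<Rightarrow> 'a word" where
  "rep X = (SOME x. x \<in> X)"

definition qadd :: "('a, 'b) monoid_scheme \<Rightarrow> ('a \<Rightarrow> real) \<Rightarrow> 'a word set \<Rightarrow> 'a word set \<Rightarrow> 'a word set" where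
  "qadd G \<nu> X Y = wrel G \<nu> `` {rep X @ rep Y}"

definition qscale :: "('a, 'b) monoid_scheme \<Rightarrow> ('a \<Rightarrow> real) \<Rightarrow> real \<Rightarrow> 'a word set \<Rightarrow> 'a word set" where
  "qscale G \<nu> c X = wrel G \<nu> `` {wscale c (rep X)}"

definition qzero :: "('a, 'b) monoid_scheme \<Rightarrow> ('a \<Rightarrow> real) \<Rightarrow> 'a word set" where
  "qzero G \<nu> = wrel G \<nu> `` {[]}"

definition qnorm :: "('a, 'b) monoid_scheme \<Rightarrow> ('a \<Rightarrow> real) \<Rightarrow> 'a word set \<Rightarrow> real" where
  "qnorm G \<nu> X = wnorm G \<nu> (rep X)"

definition real_vector_space_on ::
  "'v set \<Rightarrow> ('v \<Rightarrow> 'v \<Rightarrow> 'v) \<Rightarrow> (real \<Rightarrow> 'v \<Rightarrow> 'v) \<Rightarrow> 'v \<Rightarrow> bool" where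
  "real_vector_space_on V add sc z \<longleftrightarrow>
     z \<in> V \<and>
     (\<forall>x\<in>V. \<forall>y\<in>V. add x y \<in> V) \<and>
     (\<forall>a. \<forall>x\<in>V. sc a x \<in> V) \<and>
     (\<forall>x\<in>V. \<forall>y\<in>V. \<forall>w\<in>V. add (add x y) w = add x (add y w)) \<and>
     (\<forall>x\<in>V. \<forall>y\<in>V. add x y = add y x) \<and>
     (\<forall>x\<in>V. add x z = x) \<and>
     (\<forall>x\<in>V. \<exists>y\<in>V. add x y = z) \<and>
     (\<forall>a. \<forall>x\<in>V. \<forall>y\<in>V. sc a (add x y) = add (sc a x) (sc a y)) \<and>
     (\<forall>a b. \<forall>x\<in>V. sc (a + b) x = add (sc a x) (sc b x)) \<and>
     (\<forall>a b. \<forall>x\<in>V. sc (a * b) x = sc a (sc b x)) \<and>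
     (\<forall>x\<in>V. sc 1 x = x)"

definition real_normed_space_on ::
  "'v set \<Rightarrow> ('v \<Rightarrow> 'v \<Rightarrow> 'v) \<Rightarrow> (real \<Rightarrow> 'v \<Rightarrow> 'v) \<Rightarrow> 'v \<Rightarrow> ('v \<Rightarrow> real) \<Rightarrow> bool" where
  "real_normed_space_on V add sc z nrm \<longleftrightarrow>
     real_vector_space_on V add sc z \<and>
     (\<forall>x\<in>V. nrm x \<ge> 0) \<and>
     (\<forall>x\<in>V. nrm x = 0 \<longleftrightarrow> x = z) \<and>
     (\<forall>x\<in>V. \<forall>y\<in>V. nrm (add x y) \<le> nrm x + nrm y) \<and>
     (\<forall>a. \<forall>x\<in>V. nrm (sc a x) = \<bar>a\<bar> * nrm x)"

end

theory Submission
  imports Defs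
begin
locale fmn = group G for G :: "('a,'b) monoid_scheme" (structure) +
  fixes nu :: "'a \<Rightarrow> real"
  assumes cinv: "conj_inv_pseudo_norm G nu" and fm: "FM G"
begin

lemma nu_one[simp]: "nu \<one> = 0" using cinv by (simp add: conj_inv_pseudo_norm_def)
lemma nu_nonneg: "x \<in> carrier G \<Longrightarrow> nu x \<ge> 0" using cinv by (simp add: conj_inv_pseudo_norm_def)
lemma nu_inv: "x \<in> carrier G \<Longrightarrow> nu (inv x) = nu x" using cinv by (simp add: conj_inv_pseudo_norm_def)
lemma nu_mult: "x \<in> carrier G \<Longrightarrow> y \<in> carrier G \<Longrightarrow> nu (x \<otimes> y) \<le> nu x + nu y"
  using cinv by (simp add: conj_inv_pseudo_norm_def)
lemma nu_conj: "x \<in> carrier G \<Longrightarrow> g \<in> carrier G \<Longrightarrow> nu (g \<otimes> x \<otimes> inv g) = nu x"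
  using cinv by (simp add: conj_inv_pseudo_norm_def)

lemma nu_comm: assumes "x \<in> carrier G" "y \<in> carrier G" shows "nu (x \<otimes> y) = nu (y \<otimes> x)"
proof -
  have "x \<otimes> y = x \<otimes> (y \<otimes> x) \<otimes> inv x" using assms by (simp add: m_assoc)
  then show ?thesis using nu_conj[of "y \<otimes> x" x] assms by simp
qed

definition d :: "'a \<Rightarrow> 'a \<Rightarrow> real" where "d x y = nu (x \<otimes> inv y)"

lemma d_self[simp]: "x \<in> carrier G \<Longrightarrow> d x x = 0" by (simp add: d_def)

lemma d_tri: assumes "x \<in> carrier G" "y \<in> carrier G" "z \<in> carrier G"
  shows "d x z \<le> d x y + d y z"
proof -
  have "x \<otimes> inv z = (x \<otimes> inv y) \<otimes> (y \<otimes> inv z)" using assms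
    by (simp add: m_assoc[symmetric]) (simp add: m_assoc)
  then show ?thesis using nu_mult[of "x \<otimes> inv y" "y \<otimes> inv z"] assms by (simp add: d_def)
qed

lemma d_sym: assumes "x \<in> carrier G" "y \<in> carrier G" shows "d x y = d y x"
proof -
  have "inv (x \<otimes> inv y) = y \<otimes> inv x" using assms by (simp add: inv_mult_group)
  then show ?thesis using nu_inv[of "x \<otimes> inv y"] assms by (simp add: d_def)
qed

lemma d_left: assumes "x \<in> carrier G" "y \<in> carrier G" "g \<in> carrier G"
  shows "d (g \<otimes> x) (g \<otimes> y) = d x y"
proof -
  have "g \<otimes> x \<otimes> inv (g \<otimes> y) = g \<otimes> (x \<otimes> inv y) \<otimes> inv g" using assms
    by (simp add: inv_mult_group m_assoc)
  then show ?thesis using nu_conj[of "x \<otimes> inv y" g] assms by (simp add: d_def)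
qed

lemma d_right: assumes "x \<in> carrier G" "y \<in> carrier G" "g \<in> carrier G"
  shows "d (x \<otimes> g) (y \<otimes> g) = d x y"
proof -
  have e: "g \<otimes> (inv g \<otimes> inv y) = inv y" using assms by (simp add: m_assoc[symmetric])
  have "x \<otimes> g \<otimes> inv (y \<otimes> g) = x \<otimes> inv y" using assms
    by (simp add: inv_mult_group m_assoc e)
  then show ?thesis by (simp add: d_def)
qed

lemma d_mult: assumes "x \<in> carrier G" "y \<in> carrier G" "x' \<in> carrier G" "y' \<in> carrier G"
  shows "d (x \<otimes> x') (y \<otimes> y') \<le> d x y + d x' y'"
proof -
  have "d (x \<otimes> x') (y \<otimes> y') \<le> d (x \<otimes> x') (x \<otimes> y') + d (x \<otimes> y') (y \<otimes> y')"
    using assms by (intro d_tri) auto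
  then show ?thesis using assms by (simp add: d_left d_right)
qed

lemma nu_le_d: assumes "x \<in> carrier G" "y \<in> carrier G" shows "nu x \<le> d x y + nu y"
proof -
  have "x = (x \<otimes> inv y) \<otimes> y" using assms by (simp add: m_assoc)
  then have "nu x = nu ((x \<otimes> inv y) \<otimes> y)" by simp
  also have "\<dots> \<le> d x y + nu y" using assms nu_mult[of "x \<otimes> inv y" y] by (simp add: d_def)
  finally show ?thesis .
qed

lemma nu_nat_pow: "x \<in> carrier G \<Longrightarrow> nu (x [^] (n::nat)) \<le> real n * nu x"
proof (induction n)
  case 0 then show ?case by simp
next
  case (Suc n)
  have "nu (x [^] Suc n) \<le> nu (x [^] n) + nu x" using Suc.prems nu_mult by simp
  moreover have "nu (x [^] n) \<le> real n * nu x" using Suc by blast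
  moreover have "real (Suc n) * nu x = real n * nu x + nu x" by (simp add: distrib_right)
  ultimately show ?case by linarith
qed

lemma nu_int_pow: assumes "x \<in> carrier G" shows "nu (x [^] (k::int)) \<le> real_of_int \<bar>k\<bar> * nu x"
proof (cases "k < 0")
  case True
  then have e: "x [^] k = inv (x [^] nat (-k))" by (subst int_pow_def2) simp
  have "nu (x [^] nat (-k)) \<le> real (nat (-k)) * nu x" using nu_nat_pow[OF assms] .
  moreover have "real (nat (-k)) = real_of_int \<bar>k\<bar>" using True by simp
  ultimately show ?thesis unfolding e using assms by (simp add: nu_inv)
next
  case False
  then have e: "x [^] k = x [^] nat k" by (subst int_pow_def2) simp
  have "nu (x [^] nat k) \<le> real (nat k) * nu x" using nu_nat_pow[OF assms] .
  moreover have "real (nat k) = real_of_int \<bar>k\<bar>" using False by simp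
  ultimately show ?thesis unfolding e by simp
qed

end

context fmn begin

lemma inv_comm: assumes "x \<in> carrier G" "y \<in> carrier G" "x \<otimes> y = y \<otimes> x"
  shows "inv x \<otimes> y = y \<otimes> inv x"
proof -
  have "x \<otimes> y \<otimes> inv x = y \<otimes> x \<otimes> inv x" using assms by simp
  also have "\<dots> = y" using assms by (simp add: m_assoc)
  finally have 1: "x \<otimes> y \<otimes> inv x = y" .
  have "x \<otimes> (y \<otimes> inv x) = y" using 1 assms(1,2) by (simp add: m_assoc)
  then show ?thesis using inv_solve_left'[of "y \<otimes> inv x" x y] assms by auto
qed

lemma comm_int_pow1: assumes "x \<in> carrier G" "y \<in> carrier G" "x \<otimes> y = y \<otimes> x"
  shows "x [^] (a::int) \<otimes> y = y \<otimes> x [^] a"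
proof (cases "a < 0")
  case True
  then have e: "x [^] a = inv (x [^] nat (-a))" by (subst int_pow_def2) simp
  show ?thesis unfolding e
    by (rule inv_comm) (use assms group_commutes_pow in auto)
next
  case False
  then have e: "x [^] a = x [^] nat a" by (subst int_pow_def2) simp
  show ?thesis unfolding e using assms group_commutes_pow by auto
qed

lemma comm_int_pow: assumes "x \<in> carrier G" "y \<in> carrier G" "x \<otimes> y = y \<otimes> x"
  shows "x [^] (a::int) \<otimes> y [^] (b::int) = y [^] b \<otimes> x [^] a"
proof -
  have "x [^] a \<otimes> y = y \<otimes> x [^] a" by (rule comm_int_pow1[OF assms])
  then have "y [^] b \<otimes> x [^] a = x [^] a \<otimes> y [^] b"
    using comm_int_pow1[of y "x [^] a" b] assms by auto
  then show ?thesis by simp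
qed

lemma conj_nat_pow: assumes "x \<in> carrier G" "c \<in> carrier G"
  shows "c \<otimes> x [^] (n::nat) \<otimes> inv c = (c \<otimes> x \<otimes> inv c) [^] n"
proof (induction n)
  case 0 then show ?case using assms by simp
next
  case (Suc n)
  have "c \<otimes> x [^] Suc n \<otimes> inv c = (c \<otimes> x [^] n \<otimes> inv c) \<otimes> (c \<otimes> x \<otimes> inv c)"
    using assms by (simp add: m_assoc[symmetric]) (simp add: m_assoc)
  then show ?case using Suc by simp
qed

lemma conj_int_pow: assumes "x \<in> carrier G" "c \<in> carrier G"
  shows "c \<otimes> x [^] (a::int) \<otimes> inv c = (c \<otimes> x \<otimes> inv c) [^] a"
proof (cases "a < 0")
  case True
  then have e: "\<And>z. z [^] a = inv (z [^] nat (-a))" by (subst int_pow_def2) simp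
  have "c \<otimes> inv (x [^] nat (-a)) \<otimes> inv c = inv (c \<otimes> x [^] nat (-a) \<otimes> inv c)"
    using assms by (simp add: inv_mult_group m_assoc)
  then show ?thesis unfolding e using conj_nat_pow[OF assms] by simp
next
  case False
  then have e: "\<And>z. z [^] a = z [^] nat a" by (subst int_pow_def2) simp
  show ?thesis unfolding e using conj_nat_pow[OF assms] by simp
qed

lemma foldr_closed: "set xs \<subseteq> carrier G \<Longrightarrow> foldr (\<otimes>) xs \<one> \<in> carrier G"
  by (induction xs) auto

lemma foldr_comm: "set xs \<subseteq> carrier G \<Longrightarrow> g \<in> carrier G \<Longrightarrow> (\<forall>x\<in>set xs. x \<otimes> g = g \<otimes> x)
  \<Longrightarrow> foldr (\<otimes>) xs \<one> \<otimes> g = g \<otimes> foldr (\<otimes>) xs \<one>"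
proof (induction xs)
  case Nil then show ?case by simp
next
  case (Cons x xs)
  have c: "foldr (\<otimes>) xs \<one> \<in> carrier G" using Cons.prems foldr_closed by auto
  have "foldr (\<otimes>) (x # xs) \<one> \<otimes> g = x \<otimes> (foldr (\<otimes>) xs \<one> \<otimes> g)"
    using Cons.prems c by (simp add: m_assoc)
  also have "\<dots> = x \<otimes> (g \<otimes> foldr (\<otimes>) xs \<one>)" using Cons by simp
  also have "\<dots> = (x \<otimes> g) \<otimes> foldr (\<otimes>) xs \<one>" using Cons.prems c by (simp add: m_assoc[symmetric])
  also have "\<dots> = (g \<otimes> x) \<otimes> foldr (\<otimes>) xs \<one>" using Cons.prems by simp
  also have "\<dots> = g \<otimes> foldr (\<otimes>) (x # xs) \<one>" using Cons.prems c by (simp add: m_assoc)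
  finally show ?case .
qed

lemma foldr_conj: "set xs \<subseteq> carrier G \<Longrightarrow> c \<in> carrier G \<Longrightarrow>
  c \<otimes> foldr (\<otimes>) xs \<one> \<otimes> inv c = foldr (\<otimes>) (map (\<lambda>x. c \<otimes> x \<otimes> inv c) xs) \<one>"
proof (induction xs)
  case Nil then show ?case by simp
next
  case (Cons x xs)
  have cl: "foldr (\<otimes>) xs \<one> \<in> carrier G" using Cons.prems foldr_closed by auto
  have "c \<otimes> foldr (\<otimes>) (x # xs) \<one> \<otimes> inv c = (c \<otimes> x \<otimes> inv c) \<otimes> (c \<otimes> foldr (\<otimes>) xs \<one> \<otimes> inv c)"
    using Cons.prems cl by (simp add: m_assoc[symmetric]) (simp add: m_assoc)
  then show ?case using Cons by simp
qed

lemma conj_set_carrier: "a \<in> carrier G \<Longrightarrow> K \<subseteq> carrier G \<Longrightarrow> conj_set G a K \<subseteq> carrier G"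
  unfolding conj_set_def by auto

lemma FM_comm: assumes f: "f \<in> carrier G" and g: "g \<in> carrier G"
  shows "\<exists>c\<in>carrier G. (c \<otimes> f \<otimes> inv c) \<otimes> g = g \<otimes> (c \<otimes> f \<otimes> inv c)"
proof -
  obtain H where H: "FM_pair G H" using fm unfolding FM_def by blast
  have sg: "subgroup H G" and fin: "\<forall>f\<in>carrier G. nuH_finite G H f"
    and df: "\<forall>hs. set hs \<subseteq> carrier G \<longrightarrow> Df G H (\<Union>h\<in>set hs. conj_set G h H) \<noteq> {}"
    using H unfolding FM_pair_def by auto
  have Hc: "H \<subseteq> carrier G" using sg by (rule subgroup.subset)
  obtain xs where xs: "set xs \<subseteq> (\<Union>a\<in>carrier G. conj_set G a H)" and fx: "f = foldr (\<otimes>) xs \<one>"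
    using fin f unfolding nuH_finite_def by blast
  obtain ys where ys: "set ys \<subseteq> (\<Union>a\<in>carrier G. conj_set G a H)" and gy: "g = foldr (\<otimes>) ys \<one>"
    using fin g unfolding nuH_finite_def by blast
  define ch where "ch x = (SOME a. a \<in> carrier G \<and> x \<in> conj_set G a H)" for x
  have ch: "ch x \<in> carrier G \<and> x \<in> conj_set G (ch x) H" if "x \<in> (\<Union>a\<in>carrier G. conj_set G a H)" for x
    unfolding ch_def by (rule someI_ex) (use that in auto)
  have xsc: "set xs \<subseteq> carrier G" using xs conj_set_carrier[OF _ Hc] by blast
  have ysc: "set ys \<subseteq> carrier G" using ys conj_set_carrier[OF _ Hc] by blast
  define K where "K = (\<Union>h\<in>set (map ch xs). conj_set G h H)"
  have xsK: "set xs \<subseteq> K" unfolding K_def using ch xs by fastforce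
  have "\<forall>x\<in>set xs. ch x \<in> carrier G" using ch xs by blast
  then have hsc: "set (map ch xs) \<subseteq> carrier G" by auto
  obtain h0 where h0: "h0 \<in> Df G H K" using df hsc unfolding K_def by blast
  have "\<forall>x\<in>set ys. ch x \<in> carrier G" using ch ys by blast
  then have gsc: "set (map ch ys) \<subseteq> carrier G" by auto
  obtain h where h: "h \<in> carrier G" and hc: "commute_sets G (conj_set G (h \<otimes> h0 \<otimes> inv h) K)
          (\<Union>g\<in>set (map ch ys). conj_set G g H)"
    using h0 gsc unfolding Df_def by blast
  have ysU: "set ys \<subseteq> (\<Union>g\<in>set (map ch ys). conj_set G g H)" using ch ys by fastforce
  have h0c: "h0 \<in> carrier G" using h0 unfolding Df_def by auto
  define c where "c = h \<otimes> h0 \<otimes> inv h"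
  have cc: "c \<in> carrier G" unfolding c_def using h h0c by auto
  have cx: "(c \<otimes> x \<otimes> inv c) \<otimes> y = y \<otimes> (c \<otimes> x \<otimes> inv c)" if "x \<in> set xs" "y \<in> set ys" for x y
  proof -
    have "c \<otimes> x \<otimes> inv c \<in> conj_set G c K" using that xsK unfolding conj_set_def by blast
    moreover have "y \<in> (\<Union>g\<in>set (map ch ys). conj_set G g H)" using that ysU by blast
    ultimately show ?thesis using hc unfolding commute_sets_def c_def by blast
  qed
  have cx2: "(c \<otimes> x \<otimes> inv c) \<otimes> g = g \<otimes> (c \<otimes> x \<otimes> inv c)" if "x \<in> set xs" for x
  proof -
    have xc: "c \<otimes> x \<otimes> inv c \<in> carrier G" using that xsc cc by auto
    have "foldr (\<otimes>) ys \<one> \<otimes> (c \<otimes> x \<otimes> inv c) = (c \<otimes> x \<otimes> inv c) \<otimes> foldr (\<otimes>) ys \<one>"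
      by (rule foldr_comm[OF ysc xc]) (use cx that in auto)
    then show ?thesis unfolding gy by simp
  qed
  have hF: "foldr (\<otimes>) (map (\<lambda>x. c \<otimes> x \<otimes> inv c) xs) \<one> \<otimes> g = g \<otimes> foldr (\<otimes>) (map (\<lambda>x. c \<otimes> x \<otimes> inv c) xs) \<one>"
    by (rule foldr_comm) (use xsc cc g cx2 in auto)
  have e: "c \<otimes> f \<otimes> inv c = foldr (\<otimes>) (map (\<lambda>x. c \<otimes> x \<otimes> inv c) xs) \<one>"
    using foldr_conj[OF xsc cc] fx by simp
  have "(c \<otimes> f \<otimes> inv c) \<otimes> g = g \<otimes> (c \<otimes> f \<otimes> inv c)" unfolding e by (rule hF)
  then show ?thesis using cc by blast
qed

lemma comm_bound: assumes f: "f \<in> carrier G" and g: "g \<in> carrier G"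
  shows "\<exists>C\<ge>0. \<forall>(a::int) (b::int). nu (f [^] a \<otimes> g [^] b \<otimes> inv (g [^] b \<otimes> f [^] a)) \<le> C"
proof -
  obtain c where cc: "c \<in> carrier G" and com: "(c \<otimes> f \<otimes> inv c) \<otimes> g = g \<otimes> (c \<otimes> f \<otimes> inv c)"
    using FM_comm[OF f g] by blast
  have B: "nu (f [^] a \<otimes> g [^] b \<otimes> inv (g [^] b \<otimes> f [^] a)) \<le> 4 * nu c" for a b :: int
  proof -
    define X where "X = f [^] a"
    define Y where "Y = g [^] b"
    define X' where "X' = c \<otimes> X \<otimes> inv c"
    have Xc: "X \<in> carrier G" and Yc: "Y \<in> carrier G" and X'c: "X' \<in> carrier G"
      unfolding X_def Y_def X'_def using f g cc by auto
    have "X' = (c \<otimes> f \<otimes> inv c) [^] a" unfolding X'_def X_def using conj_int_pow[OF f cc] by simp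
    then have comXY: "X' \<otimes> Y = Y \<otimes> X'" unfolding Y_def
      using comm_int_pow[OF _ g com, of a b] f g cc by auto
    define u where "u = X \<otimes> inv X'"
    have uc: "u \<in> carrier G" unfolding u_def using Xc X'c by auto
    have Xu: "X = u \<otimes> X'" unfolding u_def using Xc X'c by (simp add: m_assoc)
    have "X' \<otimes> Y \<otimes> inv X' = Y" using comXY X'c Yc by (simp add: m_assoc)
    have e1: "X \<otimes> Y \<otimes> inv (Y \<otimes> X) = u \<otimes> (X' \<otimes> Y \<otimes> inv X') \<otimes> inv u \<otimes> inv Y"
      unfolding Xu using uc X'c Yc by (simp add: inv_mult_group m_assoc)
    also have "\<dots> = u \<otimes> Y \<otimes> inv u \<otimes> inv Y" using comXY X'c Yc by (simp add: m_assoc)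
    finally have e2: "X \<otimes> Y \<otimes> inv (Y \<otimes> X) = u \<otimes> (Y \<otimes> inv u \<otimes> inv Y)" using uc Yc by (simp add: m_assoc)
    have "nu (u \<otimes> (Y \<otimes> inv u \<otimes> inv Y)) \<le> nu u + nu (Y \<otimes> inv u \<otimes> inv Y)"
      using uc Yc by (intro nu_mult) auto
    also have "nu (Y \<otimes> inv u \<otimes> inv Y) = nu u" using nu_conj[of "inv u" Y] uc Yc nu_inv by simp
    finally have n1: "nu (X \<otimes> Y \<otimes> inv (Y \<otimes> X)) \<le> 2 * nu u" using e2 by simp
    have "u = (X \<otimes> c \<otimes> inv X) \<otimes> inv c" unfolding u_def X'_def
      using Xc cc by (simp add: inv_mult_group m_assoc)
    then have "nu u \<le> nu (X \<otimes> c \<otimes> inv X) + nu (inv c)" using Xc cc nu_mult by simp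
    also have "nu (X \<otimes> c \<otimes> inv X) = nu c" using nu_conj Xc cc by simp
    finally have "nu u \<le> nu c + nu (inv c)" .
    moreover have "nu (inv c) = nu c" using cc by (rule nu_inv)
    ultimately have "nu u \<le> 2 * nu c" by linarith
    then have "nu (X \<otimes> Y \<otimes> inv (Y \<otimes> X)) \<le> 4 * nu c" using n1 by linarith
    then show ?thesis unfolding X_def Y_def .
  qed
  have nn: "4 * nu c \<ge> 0" using nu_nonneg[OF cc] by simp
  show ?thesis by (rule exI[of _ "4 * nu c"]) (use B nn in blast)
qed

end

context fmn begin

definition prodl :: "('a \<times> int) list \<Rightarrow> 'a" where
  "prodl L = foldr (\<lambda>p acc. fst p [^] snd p \<otimes> acc) L \<one>"

lemma prodl_Nil[simp]: "prodl [] = \<one>" by (simp add: prodl_def)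
lemma prodl_Cons[simp]: "prodl (p # L) = fst p [^] snd p \<otimes> prodl L" by (simp add: prodl_def)

lemma prodl_closed[intro,simp]: "fst ` set L \<subseteq> carrier G \<Longrightarrow> prodl L \<in> carrier G"
  by (induction L) auto

lemma prodl_closed2: "fst ` set u \<subseteq> carrier G \<Longrightarrow> fst ` set v \<subseteq> carrier G \<Longrightarrow> prodl (u @ v) \<in> carrier G"
  by (rule prodl_closed) (simp add: image_Un)

lemma prodl_closed3: "fst ` set u \<subseteq> carrier G \<Longrightarrow> fst ` set v \<subseteq> carrier G \<Longrightarrow> fst x \<in> carrier G \<Longrightarrow> prodl (u @ x # v) \<in> carrier G"
  by (rule prodl_closed) (simp add: image_Un)

lemma prodl_append: "fst ` set L \<subseteq> carrier G \<Longrightarrow> fst ` set M \<subseteq> carrier G \<Longrightarrow>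
  prodl (L @ M) = prodl L \<otimes> prodl M"
  by (induction L) (auto simp: m_assoc)

definition cb :: "'a \<Rightarrow> 'a \<Rightarrow> real" where
  "cb x y = (SOME C. C \<ge> 0 \<and> (\<forall>(a::int) (b::int). nu (x [^] a \<otimes> y [^] b \<otimes> inv (y [^] b \<otimes> x [^] a)) \<le> C))"

lemma cb: assumes "x \<in> carrier G" "y \<in> carrier G"
  shows "cb x y \<ge> 0 \<and> (\<forall>(a::int) (b::int). nu (x [^] a \<otimes> y [^] b \<otimes> inv (y [^] b \<otimes> x [^] a)) \<le> cb x y)"
  unfolding cb_def by (rule someI_ex) (rule comm_bound[OF assms])

definition BS :: "'a set \<Rightarrow> real" where
  "BS S = (\<Sum>p\<in>S \<times> S. cb (fst p) (snd p))"

lemma BS_nonneg: "S \<subseteq> carrier G \<Longrightarrow> BS S \<ge> 0"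
  unfolding BS_def
proof (rule sum_nonneg)
  fix p assume "S \<subseteq> carrier G" "p \<in> S \<times> S"
  then have "fst p \<in> carrier G" "snd p \<in> carrier G" by auto
  then show "cb (fst p) (snd p) \<ge> 0" using cb[of "fst p" "snd p"] by blast
qed

lemma BS_bound: assumes "finite S" "S \<subseteq> carrier G" "x \<in> S" "y \<in> S"
  shows "nu (x [^] (a::int) \<otimes> y [^] (b::int) \<otimes> inv (y [^] b \<otimes> x [^] a)) \<le> BS S"
proof -
  have mem: "(x,y) \<in> S \<times> S" using assms by simp
  have nn: "0 \<le> cb (fst p) (snd p)" if "p \<in> S \<times> S - {(x,y)}" for p
  proof -
    have "fst p \<in> carrier G" "snd p \<in> carrier G" using that assms by auto
    then show ?thesis using cb by blast
  qed
  have fin: "finite (S \<times> S)" using assms by simp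
  have "cb (fst (x,y)) (snd (x,y)) \<le> BS S" unfolding BS_def
    by (rule member_le_sum[OF mem nn fin])
  then have "cb x y \<le> BS S" by simp
  moreover have "x \<in> carrier G" "y \<in> carrier G" using assms by auto
  ultimately show ?thesis using cb[of x y] by (meson order_trans)
qed

lemma move_front: assumes S: "finite S" "S \<subseteq> carrier G" and u: "fst ` set u \<subseteq> S"
  and x: "fst x \<in> S" and v: "fst ` set v \<subseteq> carrier G"
  shows "d (prodl (u @ x # v)) (prodl (x # u @ v)) \<le> BS S * length u"
  using u
proof (induction u)
  case Nil
  have "prodl (x # v) \<in> carrier G" using x v S by auto
  then show ?case by simp
next
  case (Cons y u)
  have yc: "fst y \<in> carrier G" using Cons.prems S by auto
  have xc: "fst x \<in> carrier G" using x S by auto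
  have uc: "fst ` set u \<subseteq> carrier G" using Cons.prems S by auto
  define y' where "y' = fst y [^] snd y"
  define x' where "x' = fst x [^] snd x"
  have y'c: "y' \<in> carrier G" and x'c: "x' \<in> carrier G" unfolding y'_def x'_def using xc yc by auto
  define R where "R = prodl (u @ v)"
  have Rc: "R \<in> carrier G" unfolding R_def using uc v by (intro prodl_closed) auto
  have P1c: "prodl (u @ x # v) \<in> carrier G" using uc v xc by (intro prodl_closed) auto
  have e1: "prodl ((y # u) @ x # v) = y' \<otimes> prodl (u @ x # v)" by (simp add: y'_def)
  have e2: "prodl (x # (y # u) @ v) = x' \<otimes> y' \<otimes> R" using x'c y'c Rc by (simp add: x'_def y'_def R_def m_assoc)
  have e3: "prodl (x # u @ v) = x' \<otimes> R" by (simp add: x'_def R_def)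
  have "d (y' \<otimes> prodl (u @ x # v)) (x' \<otimes> y' \<otimes> R)
      \<le> d (y' \<otimes> prodl (u @ x # v)) (y' \<otimes> (x' \<otimes> R)) + d (y' \<otimes> (x' \<otimes> R)) (x' \<otimes> y' \<otimes> R)"
    by (rule d_tri) (use y'c x'c Rc P1c in auto)
  also have "d (y' \<otimes> prodl (u @ x # v)) (y' \<otimes> (x' \<otimes> R)) = d (prodl (u @ x # v)) (x' \<otimes> R)"
    by (rule d_left) (use y'c x'c Rc P1c in auto)
  also have "\<dots> \<le> BS S * length u" using Cons e3 by auto
  also have "d (y' \<otimes> (x' \<otimes> R)) (x' \<otimes> y' \<otimes> R) = d (y' \<otimes> x') (x' \<otimes> y')"
    using d_right[of "y' \<otimes> x'" "x' \<otimes> y'" R] y'c x'c Rc by (simp add: m_assoc)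
  also have "\<dots> \<le> BS S" unfolding d_def y'_def x'_def
    by (rule BS_bound) (use S x Cons.prems in auto)
  finally show ?case unfolding e1 e2 by (simp add: algebra_simps)
qed

lemma perm_bound: assumes S: "finite S" "S \<subseteq> carrier G" and L: "fst ` set L \<subseteq> S"
  and m: "mset L = mset L'"
  shows "d (prodl L) (prodl L') \<le> BS S * (length L)^2"
  using L m
proof (induction L arbitrary: L')
  case Nil then show ?case by simp
next
  case (Cons x L)
  have "x \<in># mset L'" using Cons.prems(2)[symmetric] by simp
  then have "x \<in> set L'" by simp
  then obtain u v where L': "L' = u @ x # v" using split_list[of x L'] by blast
  have mL: "mset L = mset (u @ v)" using Cons.prems(2) unfolding L' by simp
  have sL': "set L' = set (x # L)" using arg_cong[OF Cons.prems(2), of set_mset] by simp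
  have sxL: "fst ` set L' \<subseteq> S" using Cons.prems(1) unfolding sL' by simp
  have uS: "fst ` set u \<subseteq> S" and vS: "fst ` set v \<subseteq> S" using sxL unfolding L' by auto
  have xS: "fst x \<in> S" and LS: "fst ` set L \<subseteq> S"
    using Cons.prems(1) by auto
  have "length L = length (u @ v)" using arg_cong[OF mL, of size] by simp
  then have lu: "length u \<le> length L" by simp
  have vc: "fst ` set v \<subseteq> carrier G" using vS S(2) by (rule subset_trans)
  have uc: "fst ` set u \<subseteq> carrier G" using uS S(2) by (rule subset_trans)
  have Lc: "fst ` set L \<subseteq> carrier G" using LS S(2) by (rule subset_trans)
  have xc: "fst x \<in> carrier G" using xS S(2) by blast
  define x' where "x' = fst x [^] snd x"
  have x'c: "x' \<in> carrier G" unfolding x'_def using xc by auto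
  have t: "d (prodl (x # L)) (prodl L') \<le> d (prodl (x # L)) (prodl (x # u @ v)) + d (prodl (x # u @ v)) (prodl L')"
    using Lc uc vc xc L' x'c prodl_closed2[OF uc vc] prodl_closed3[OF uc vc xc] prodl_closed[OF Lc]
    by (intro d_tri) (auto simp: x'_def)
  have t1: "d (prodl (x # L)) (prodl (x # u @ v)) = d (prodl L) (prodl (u @ v))"
    using d_left[of "prodl L" "prodl (u @ v)" x'] Lc uc vc x'c prodl_closed2[OF uc vc] by (simp add: x'_def)
  have t2: "d (prodl L) (prodl (u @ v)) \<le> BS S * (length L)^2" using Cons.IH[OF LS mL] .
  have t3: "d (prodl (x # u @ v)) (prodl L') \<le> BS S * length u"
  proof -
    have "d (prodl (x # u @ v)) (prodl L') = d (prodl L') (prodl (x # u @ v))"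
      unfolding L' using prodl_closed3[OF uc vc xc] prodl_closed2[OF uc vc] xc
      by (intro d_sym) auto
    then show ?thesis unfolding L' using move_front[OF S uS xS vc] by simp
  qed
  have t4: "BS S * length u \<le> BS S * length L"
    by (rule mult_left_mono) (use lu BS_nonneg[OF S(2)] in auto)
  have a5: "real ((length L)^2) + real (length L) \<le> real ((length (x # L))^2)"
    by (simp add: power2_eq_square)
  have "BS S * (real ((length L)^2) + real (length L)) \<le> BS S * real ((length (x # L))^2)"
    by (rule mult_left_mono[OF a5 BS_nonneg[OF S(2)]])
  then have t5: "BS S * (length L)^2 + BS S * length L \<le> BS S * (length (x # L))^2"
    by (simp add: distrib_left)
  have t2': "d (prodl (x # L)) (prodl (x # u @ v)) \<le> BS S * (length L)^2" using t1 t2 by simp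
  have "d (prodl (x # L)) (prodl L') \<le> BS S * (length L)^2 + BS S * length u"
    by (rule order_trans[OF t add_mono[OF t2' t3]])
  then have "d (prodl (x # L)) (prodl L') \<le> BS S * (length L)^2 + BS S * length L"
    using t4 by (rule order_trans[OF _ add_left_mono])
  then show ?case using t5 by (rule order_trans)
qed

end

lemma subadd_iter: fixes a :: "nat \<Rightarrow> real" assumes sub: "\<And>m n. a (m+n) \<le> a m + a n"
  shows "a (q*k + j) \<le> real q * a k + a j"
proof (induction q)
  case 0 then show ?case by simp
next
  case (Suc q)
  have "a (Suc q * k + j) = a (k + (q * k + j))" by (simp add: algebra_simps)
  also have "\<dots> \<le> a k + a (q * k + j)" by (rule sub)
  also have "\<dots> \<le> a k + (real q * a k + a j)" using Suc by simp
  finally show ?case by (simp add: algebra_simps)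
qed

lemma fekete: fixes a :: "nat \<Rightarrow> real" assumes nn: "\<And>n. a n \<ge> 0" and sub: "\<And>m n. a (m+n) \<le> a m + a n"
  shows "convergent (\<lambda>n. a n / real n)"
proof -
  define f where "f n = a n / real n" for n
  define L where "L = Inf (f ` {1..})"
  have bdd: "bdd_below (f ` {1..})" unfolding f_def using nn by (intro bdd_belowI[of _ 0]) auto
  have ne: "f ` {1..} \<noteq> {}" by auto
  have low: "L \<le> f n" if "n \<ge> 1" for n unfolding L_def by (rule cInf_lower) (use that bdd in auto)
  have "f \<longlonglongrightarrow> L"
  proof (rule LIMSEQ_I)
    fix r :: real assume r: "r > 0"
    have "L < L + r/2" using r by simp
    then have "\<exists>x\<in>{1..}. f x < L + r/2" using cInf_less_iff[OF ne bdd, of "L + r/2"]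
      unfolding L_def[symmetric] by simp
    then obtain k where k1: "k \<ge> 1" and fk: "f k < L + r/2" by auto
    define M where "M = (\<Sum>j<k. a j)"
    have aM: "a j \<le> M" if "j < k" for j
      unfolding M_def by (rule member_le_sum) (use that nn in auto)
    have M0: "M \<ge> 0" unfolding M_def by (rule sum_nonneg) (use nn in auto)
    obtain N0 :: nat where N0: "2 * M / r < real N0" using reals_Archimedean2 by blast
    define N where "N = max N0 1"
    have "\<forall>n\<ge>N. norm (f n - L) < r"
    proof (intro allI impI)
      fix n assume nN: "n \<ge> N"
      have n1: "n \<ge> 1" using nN unfolding N_def by simp
      have npos: "real n > 0" using n1 by simp
      have kpos: "real k > 0" using k1 by simp
      define q where "q = n div k"
      have nq: "n = q * k + n mod k" unfolding q_def by simp
      have "a n \<le> real q * a k + a (n mod k)"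
        using subadd_iter[OF sub, of q k "n mod k"] nq by simp
      also have "a (n mod k) \<le> M" using aM k1 by simp
      finally have an: "a n \<le> real q * a k + M" by simp
      have qk: "real q * real k \<le> real n" unfolding q_def
        by (metis div_times_less_eq_dividend of_nat_le_iff of_nat_mult)
      have "real q * a k = (real q * real k) * (a k / real k)" using kpos by simp
      also have "\<dots> \<le> real n * (a k / real k)" by (rule mult_right_mono[OF qk]) (use nn kpos in simp)
      finally have "real q * a k \<le> real n * f k" unfolding f_def .
      then have "a n \<le> real n * f k + M" using an by simp
      then have "f n \<le> f k + M / real n" unfolding f_def using npos by (simp add: field_simps)
      moreover have "M / real n < r / 2"
      proof -
        have "2 * M / r < real n" using N0 nN unfolding N_def by simp
        then have "2 * M < r * real n" using r by (simp add: field_simps)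
        then show ?thesis using npos by (simp add: field_simps)
      qed
      ultimately have "f n < L + r" using fk by linarith
      moreover have "L \<le> f n" using low n1 by simp
      ultimately show "norm (f n - L) < r" by simp
    qed
    then show "\<exists>no. \<forall>n\<ge>no. norm (f n - L) < r" by blast
  qed
  then show ?thesis unfolding f_def convergent_def by blast
qed

lemma conv_sub: fixes b :: "nat \<Rightarrow> real" assumes nn: "\<And>n. b n \<ge> 0"
  and sub: "\<And>m n. b (m+n) \<le> b m + b n + C" and C: "C \<ge> 0"
  shows "convergent (\<lambda>n. b n / real n)"
proof -
  have "convergent (\<lambda>n. (b n + C) / real n)"
    by (rule fekete) (use nn C sub in \<open>auto simp: algebra_simps\<close>)
  then obtain L where L: "(\<lambda>n. (b n + C) / real n) \<longlonglongrightarrow> L" unfolding convergent_def by blast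
  have "(\<lambda>n. (b n + C) / real n - C / real n) \<longlonglongrightarrow> L - 0"
    by (rule tendsto_diff[OF L lim_const_over_n])
  moreover have "(\<lambda>n. (b n + C) / real n - C / real n) = (\<lambda>n. b n / real n)"
    by (simp add: add_divide_distrib)
  ultimately show ?thesis unfolding convergent_def by auto
qed

context fmn begin

lemma ev_prodl: "word_eval G w n = prodl (map (\<lambda>p. (fst p, \<lfloor>snd p * real n\<rfloor>)) w)"
  unfolding word_eval_def prodl_def by (induction w) auto

lemma words_iff: "w \<in> words G \<longleftrightarrow> fst ` set w \<subseteq> carrier G"
  by (simp add: words_def)

lemma ev_closed[simp]: "w \<in> words G \<Longrightarrow> word_eval G w n \<in> carrier G"
  unfolding ev_prodl words_iff by (rule prodl_closed) auto

lemma ev_append: "w \<in> words G \<Longrightarrow> v \<in> words G \<Longrightarrow>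
  word_eval G (w @ v) n = word_eval G w n \<otimes> word_eval G v n"
  unfolding ev_prodl words_iff by (subst map_append, rule prodl_append) auto

lemma ev_Nil[simp]: "word_eval G [] n = \<one>" by (simp add: word_eval_def)

lemma ev_0: "w \<in> words G \<Longrightarrow> word_eval G w 0 = \<one>"
  unfolding words_iff word_eval_def by (induction w) auto

lemma prodl_close: fixes w :: "('a \<times> 'c) list" and f h :: "'a \<times> 'c \<Rightarrow> int"
  assumes "fst ` set w \<subseteq> carrier G" "\<And>p. p \<in> set w \<Longrightarrow> real_of_int \<bar>f p - h p\<bar> \<le> K"
  shows "d (prodl (map (\<lambda>p. (fst p, f p)) w)) (prodl (map (\<lambda>p. (fst p, h p)) w)) \<le> K * (\<Sum>p\<leftarrow>w. nu (fst p))"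
  using assms
proof (induction w)
  case Nil then show ?case by simp
next
  case (Cons p w)
  define g where "g = fst p"
  have gc: "g \<in> carrier G" unfolding g_def using Cons.prems by auto
  have wc: "fst ` set w \<subseteq> carrier G" using Cons.prems by auto
  define X where "X = prodl (map (\<lambda>p. (fst p, f p)) w)"
  define Y where "Y = prodl (map (\<lambda>p. (fst p, h p)) w)"
  have Xc: "X \<in> carrier G" unfolding X_def by (rule prodl_closed) (use wc in auto)
  have Yc: "Y \<in> carrier G" unfolding Y_def by (rule prodl_closed) (use wc in auto)
  have IH: "d X Y \<le> K * (\<Sum>p\<leftarrow>w. nu (fst p))" unfolding X_def Y_def
    by (rule Cons.IH) (use Cons.prems in auto)
  have "d (g [^] f p \<otimes> X) (g [^] h p \<otimes> Y) \<le> d (g [^] f p) (g [^] h p) + d X Y"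
    by (rule d_mult) (use gc Xc Yc in auto)
  also have "d (g [^] f p) (g [^] h p) = nu (g [^] (f p - h p))"
    unfolding d_def using gc by (simp add: int_pow_diff)
  also have "\<dots> \<le> real_of_int \<bar>f p - h p\<bar> * nu g" by (rule nu_int_pow[OF gc])
  also have "\<dots> \<le> K * nu g" by (rule mult_right_mono) (use Cons.prems nu_nonneg[OF gc] in auto)
  finally have "d (g [^] f p \<otimes> X) (g [^] h p \<otimes> Y) \<le> K * nu g + K * (\<Sum>p\<leftarrow>w. nu (fst p))"
    using IH by simp
  then show ?case unfolding X_def Y_def g_def by (simp add: distrib_left)
qed

lemma prodl_split: fixes w :: "('a \<times> 'c) list" and f h :: "'a \<times> 'c \<Rightarrow> int"
  assumes "fst ` set w \<subseteq> carrier G"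
  shows "prodl (map (\<lambda>p. (fst p, f p + h p)) w) = prodl (concat (map (\<lambda>p. [(fst p, f p), (fst p, h p)]) w))"
  using assms
proof (induction w)
  case Nil then show ?case by simp
next
  case (Cons p w)
  have gc: "fst p \<in> carrier G" using Cons.prems by auto
  have wc: "fst ` set w \<subseteq> carrier G" using Cons.prems by auto
  have Rc: "prodl (concat (map (\<lambda>p. [(fst p, f p), (fst p, h p)]) w)) \<in> carrier G"
    by (rule prodl_closed) (use wc in auto)
  show ?case using Cons.IH[OF wc] gc Rc by (simp add: int_pow_mult m_assoc)
qed

lemma mset_split: "mset (concat (map (\<lambda>p. [F p, H p]) w)) = mset (map F w @ map H w)"
  by (induction w) auto

lemma floor_add_bound: "real_of_int \<bar>\<lfloor>x + y\<rfloor> - (\<lfloor>x\<rfloor> + \<lfloor>y\<rfloor>)\<bar> \<le> (1::real)"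
  by (simp add: floor_add)

lemma subadd: assumes w: "w \<in> words G"
  shows "\<exists>C\<ge>0. \<forall>n m. nu (word_eval G w (n+m)) \<le> nu (word_eval G w n) + nu (word_eval G w m) + C"
proof -
  define S where "S = fst ` set w"
  have S: "finite S" "S \<subseteq> carrier G" using w unfolding S_def words_iff by auto
  have wc: "fst ` set w \<subseteq> carrier G" using w words_iff by auto
  define C1 where "C1 = (\<Sum>p\<leftarrow>w. nu (fst p))"
  define C2 where "C2 = BS S * (2 * length w)^2"
  have C1: "C1 \<ge> 0" unfolding C1_def by (rule sum_list_nonneg) (use wc nu_nonneg in auto)
  have C2: "C2 \<ge> 0" unfolding C2_def using BS_nonneg[OF S(2)] by simp
  have "nu (word_eval G w (n+m)) \<le> nu (word_eval G w n) + nu (word_eval G w m) + (1 * C1 + C2)" for n m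
  proof -
    define fn where "fn p = \<lfloor>snd p * real n\<rfloor>" for p :: "'a \<times> real"
    define fm where "fm p = \<lfloor>snd p * real m\<rfloor>" for p :: "'a \<times> real"
    define fnm where "fnm p = \<lfloor>snd p * real (n+m)\<rfloor>" for p :: "'a \<times> real"
    define A where "A = map (\<lambda>p. (fst p, fn p)) w"
    define B where "B = map (\<lambda>p. (fst p, fm p)) w"
    define E where "E = concat (map (\<lambda>p. [(fst p, fn p), (fst p, fm p)]) w)"
    define P where "P = prodl (map (\<lambda>p. (fst p, fn p + fm p)) w)"
    have Ac: "fst ` set A \<subseteq> carrier G" unfolding A_def using wc by auto
    have Bc: "fst ` set B \<subseteq> carrier G" unfolding B_def using wc by auto
    have ES: "fst ` set E \<subseteq> S" unfolding E_def S_def by force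
    have Ec: "fst ` set E \<subseteq> carrier G" using ES S by auto
    have e1: "word_eval G w (n+m) = prodl (map (\<lambda>p. (fst p, fnm p)) w)" unfolding ev_prodl fnm_def ..
    have c1: "word_eval G w (n+m) \<in> carrier G" using w by simp
    have Pc: "P \<in> carrier G" unfolding P_def by (rule prodl_closed) (use wc in auto)
    have d1: "d (word_eval G w (n+m)) P \<le> 1 * C1" unfolding e1 P_def C1_def
    proof (rule prodl_close[OF wc])
      fix p :: "'a \<times> real"
      have "snd p * real (n+m) = snd p * real n + snd p * real m" by (simp add: algebra_simps)
      then show "real_of_int \<bar>fnm p - (fn p + fm p)\<bar> \<le> 1"
        unfolding fnm_def fn_def fm_def using floor_add_bound by simp
    qed
    have PE: "P = prodl E" unfolding P_def E_def by (rule prodl_split[OF wc])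
    have mE: "mset E = mset (A @ B)" unfolding E_def A_def B_def by (rule mset_split)
    have lE: "length E = 2 * length w" using arg_cong[OF mE, of size] unfolding A_def B_def by simp
    have d2: "d (prodl E) (prodl (A @ B)) \<le> C2" using perm_bound[OF S ES mE] unfolding C2_def lE .
    have AB: "prodl (A @ B) = word_eval G w n \<otimes> word_eval G w m"
      unfolding ev_prodl A_def B_def fn_def fm_def by (rule prodl_append) (use wc in auto)
    have n3: "nu (prodl (A @ B)) \<le> nu (word_eval G w n) + nu (word_eval G w m)"
      unfolding AB by (rule nu_mult) (use w in auto)
    have "nu (word_eval G w (n+m)) \<le> d (word_eval G w (n+m)) P + nu P" by (rule nu_le_d[OF c1 Pc])
    moreover have "nu P \<le> d (prodl E) (prodl (A @ B)) + nu (prodl (A @ B))"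
      unfolding PE by (rule nu_le_d) (use Ec Ac Bc prodl_closed2 in auto)
    ultimately show ?thesis using d1 d2 n3 by linarith
  qed
  moreover have "1 * C1 + C2 \<ge> 0" using C1 C2 by simp
  ultimately show ?thesis by blast
qed

lemma conv: assumes w: "w \<in> words G" shows "convergent (word_seq G nu w)"
proof -
  obtain C where C: "C \<ge> 0" "\<And>n m. nu (word_eval G w (n+m)) \<le> nu (word_eval G w n) + nu (word_eval G w m) + C"
    using subadd[OF w] by blast
  have "convergent (\<lambda>n. nu (word_eval G w n) / real n)"
    by (rule conv_sub[OF _ C(2) C(1)]) (use w nu_nonneg in simp)
  then show ?thesis unfolding word_seq_def[abs_def] .
qed

lemma seq_Nil: "word_seq G nu [] = (\<lambda>n. 0)" unfolding word_seq_def[abs_def] by simp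

lemma wnorm_lim: assumes w: "w \<in> words G" shows "word_seq G nu w \<longlonglongrightarrow> wnorm G nu w"
proof (cases "w = []")
  case True then show ?thesis by (simp add: seq_Nil wnorm_def)
next
  case False then show ?thesis using conv[OF w] by (simp add: wnorm_def convergent_LIMSEQ_iff)
qed

end

context fmn begin

abbreviation ev where "ev w n \<equiv> word_eval G w n"

lemma wnorm_nonneg: assumes w: "w \<in> words G" shows "wnorm G nu w \<ge> 0"
  by (rule LIMSEQ_le_const[OF wnorm_lim[OF w]]) (use w nu_nonneg in \<open>auto simp: word_seq_def\<close>)

lemma wnorm_le: assumes u: "u \<in> words G" and v: "v \<in> words G" and w: "w \<in> words G"
  and b: "\<And>n. nu (ev u n) \<le> nu (ev v n) + nu (ev w n) + C"
  shows "wnorm G nu u \<le> wnorm G nu v + wnorm G nu w"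
proof -
  have lim: "(\<lambda>n. word_seq G nu v n + word_seq G nu w n + C / real n) \<longlonglongrightarrow> wnorm G nu v + wnorm G nu w + 0"
    by (intro tendsto_add wnorm_lim v w lim_const_over_n)
  have le: "word_seq G nu u n \<le> word_seq G nu v n + word_seq G nu w n + C / real n" for n
  proof -
    have "nu (ev u n) / real n \<le> (nu (ev v n) + nu (ev w n) + C) / real n"
      by (rule divide_right_mono[OF b]) simp
    then show ?thesis unfolding word_seq_def by (simp add: add_divide_distrib)
  qed
  show ?thesis using LIMSEQ_le[OF wnorm_lim[OF u] lim] le by simp
qed

lemma wnorm_le1: assumes u: "u \<in> words G" and v: "v \<in> words G"
  and b: "\<And>n. nu (ev u n) \<le> nu (ev v n) + C"
  shows "wnorm G nu u \<le> wnorm G nu v"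
proof -
  have "wnorm G nu u \<le> wnorm G nu v + wnorm G nu []"
    by (rule wnorm_le[OF u v, of "[]" C]) (use b in \<open>auto simp: words_def\<close>)
  then show ?thesis by (simp add: wnorm_def)
qed

lemma wnorm_bdd: assumes u: "u \<in> words G" and b: "\<And>n. nu (ev u n) \<le> C"
  shows "wnorm G nu u = 0"
proof -
  have "wnorm G nu u \<le> wnorm G nu []"
    by (rule wnorm_le1[OF u, of "[]" C]) (use b in \<open>auto simp: words_def\<close>)
  then show ?thesis using wnorm_nonneg[OF u] by (simp add: wnorm_def)
qed

lemma wnorm_d_eq: assumes u: "u \<in> words G" and v: "v \<in> words G"
  and b: "\<And>n. d (ev u n) (ev v n) \<le> C"
  shows "wnorm G nu u = wnorm G nu v"
proof -
  have "wnorm G nu u \<le> wnorm G nu v"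
  proof (rule wnorm_le1[OF u v])
    fix n show "nu (ev u n) \<le> nu (ev v n) + C" using nu_le_d[of "ev u n" "ev v n"] b[of n] u v by simp
  qed
  moreover have "wnorm G nu v \<le> wnorm G nu u"
  proof (rule wnorm_le1[OF v u])
    fix n show "nu (ev v n) \<le> nu (ev u n) + C" using nu_le_d[of "ev v n" "ev u n"] b[of n] u v d_sym[of "ev u n" "ev v n"] by simp
  qed
  ultimately show ?thesis by simp
qed

lemma wnorm_append_le: assumes u: "u \<in> words G" and v: "v \<in> words G"
  shows "wnorm G nu (u @ v) \<le> wnorm G nu u + wnorm G nu v"
proof -
  have uv: "u @ v \<in> words G" using u v by (simp add: words_def image_Un)
  show ?thesis
    by (rule wnorm_le[OF uv u v, of 0]) (use u v in \<open>simp add: ev_append nu_mult\<close>)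
qed

lemma wnorm_perm: assumes u: "u \<in> words G" and v: "v \<in> words G" and m: "mset u = mset v"
  shows "wnorm G nu u = wnorm G nu v"
proof (rule wnorm_d_eq[OF u v])
  fix n
  define S where "S = fst ` set u"
  have S: "finite S" "S \<subseteq> carrier G" using u unfolding S_def words_iff by auto
  define F where "F = (\<lambda>p::'a \<times> real. (fst p, \<lfloor>snd p * real n\<rfloor>))"
  have "d (prodl (map F u)) (prodl (map F v)) \<le> BS S * (length (map F u))^2"
  proof (rule perm_bound[OF S])
    show "fst ` set (map F u) \<subseteq> S" unfolding S_def F_def by force
    show "mset (map F u) = mset (map F v)" using m by simp
  qed
  then show "d (ev u n) (ev v n) \<le> BS S * (length u)^2" unfolding ev_prodl F_def by simp
qed

lemma wbar_Nil[simp]: "wbar [] = []" by (simp add: wbar_def)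
lemma wbar_Cons: "wbar (p # w) = wbar w @ [(fst p, - snd p)]" by (cases p) (simp add: wbar_def)
lemma wbar_append: "wbar (u @ v) = wbar v @ wbar u" by (simp add: wbar_def)
lemma wbar_wbar[simp]: "wbar (wbar w) = w" by (induction w) (auto simp: wbar_def)
lemma wbar_words: "w \<in> words G \<Longrightarrow> wbar w \<in> words G" by (auto simp: wbar_def words_def)
lemma words_append: "u \<in> words G \<Longrightarrow> v \<in> words G \<Longrightarrow> u @ v \<in> words G" by (simp add: words_def image_Un)
lemma words_Cons: "p # w \<in> words G \<longleftrightarrow> fst p \<in> carrier G \<and> w \<in> words G" by (simp add: words_def)
lemma words_Nil[simp]: "[] \<in> words G" by (simp add: words_def)

lemma ev_Cons: "ev (p # w) n = fst p [^] \<lfloor>snd p * real n\<rfloor> \<otimes> ev w n"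
  by (simp add: ev_prodl)

lemma ev_single: "fst p \<in> carrier G \<Longrightarrow> ev [p] n = fst p [^] \<lfloor>snd p * real n\<rfloor>"
  by (simp add: ev_prodl)

lemma floor_neg_bound: "real_of_int \<bar>\<lfloor>x\<rfloor> + \<lfloor>- x\<rfloor>\<bar> \<le> (1::real)"
  using floor_add_bound[of x "-x"] by simp

lemma cancel_bound: assumes w: "w \<in> words G"
  shows "nu (ev (w @ wbar w) n) \<le> (\<Sum>p\<leftarrow>w. nu (fst p))"
  using w
proof (induction w)
  case Nil then show ?case by simp
next
  case (Cons p w)
  have gc: "fst p \<in> carrier G" and w: "w \<in> words G" using Cons.prems words_Cons by auto
  define g where "g = fst p"
  define a where "a = \<lfloor>snd p * real n\<rfloor>"
  define b where "b = \<lfloor>- snd p * real n\<rfloor>"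
  define Y where "Y = ev (w @ wbar w) n"
  have ww: "w @ wbar w \<in> words G" using w wbar_words words_append by auto
  have Yc: "Y \<in> carrier G" unfolding Y_def using ww by simp
  have q: "[(fst p, - snd p)] \<in> words G" using gc by (simp add: words_def)
  have e: "ev ((p # w) @ wbar (p # w)) n = g [^] a \<otimes> (Y \<otimes> g [^] b)"
  proof -
    have "(p # w) @ wbar (p # w) = p # ((w @ wbar w) @ [(fst p, - snd p)])" by (simp add: wbar_Cons)
    then show ?thesis unfolding Y_def using ev_append[OF ww q, of n] ev_single[of "(fst p, - snd p)" n] gc
      by (simp add: ev_Cons g_def a_def b_def)
  qed
  have "nu (g [^] a \<otimes> (Y \<otimes> g [^] b)) = nu ((Y \<otimes> g [^] b) \<otimes> g [^] a)"
    by (rule nu_comm) (use gc Yc in \<open>auto simp: g_def\<close>)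
  also have "(Y \<otimes> g [^] b) \<otimes> g [^] a = Y \<otimes> g [^] (b + a)"
    using gc Yc by (simp add: g_def m_assoc int_pow_mult)
  also have "nu (Y \<otimes> g [^] (b + a)) \<le> nu Y + nu (g [^] (b + a))"
    by (rule nu_mult) (use gc Yc in \<open>auto simp: g_def\<close>)
  also have "nu (g [^] (b + a)) \<le> real_of_int \<bar>b + a\<bar> * nu g" by (rule nu_int_pow) (use gc in \<open>simp add: g_def\<close>)
  also have "\<dots> \<le> 1 * nu g"
  proof (rule mult_right_mono)
    show "real_of_int \<bar>b + a\<bar> \<le> 1" unfolding a_def b_def using floor_neg_bound[of "snd p * real n"] by (simp add: add.commute)
    show "0 \<le> nu g" using gc nu_nonneg by (simp add: g_def)
  qed
  finally have "nu (ev ((p # w) @ wbar (p # w)) n) \<le> nu Y + nu g" unfolding e by simp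
  then show ?case using Cons.IH[OF w] unfolding Y_def g_def by simp
qed

lemma wnorm_wbar_le: assumes w: "w \<in> words G" shows "wnorm G nu (wbar w) \<le> wnorm G nu w"
proof (rule wnorm_le1[OF wbar_words[OF w] w])
  fix n
  have c1: "ev w n \<in> carrier G" and c2: "ev (wbar w) n \<in> carrier G" using w wbar_words by auto
  have "ev (wbar w) n = inv (ev w n) \<otimes> ev (w @ wbar w) n"
    using c1 c2 ev_append[OF w wbar_words[OF w]] by (simp add: m_assoc[symmetric])
  then have "nu (ev (wbar w) n) \<le> nu (inv (ev w n)) + nu (ev (w @ wbar w) n)"
    using c1 c2 nu_mult w wbar_words words_append by (metis ev_closed inv_closed)
  then show "nu (ev (wbar w) n) \<le> nu (ev w n) + (\<Sum>p\<leftarrow>w. nu (fst p))"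
    using cancel_bound[OF w, of n] nu_inv[OF c1] by simp
qed

lemma wnorm_wbar: assumes w: "w \<in> words G" shows "wnorm G nu (wbar w) = wnorm G nu w"
  using wnorm_wbar_le[OF w] wnorm_wbar_le[OF wbar_words[OF w]] by simp

lemma wnorm_cancel: assumes w: "w \<in> words G" shows "wnorm G nu (w @ wbar w) = 0"
  by (rule wnorm_bdd[OF words_append[OF w wbar_words[OF w]] cancel_bound[OF w]])

end

lemma floor_diff_bound: "real_of_int \<bar>\<lfloor>x\<rfloor> - \<lfloor>y\<rfloor>\<bar> \<le> \<bar>x - y\<bar> + (1::real)"
proof -
  have a: "real_of_int \<lfloor>x\<rfloor> \<le> x" "x < real_of_int \<lfloor>x\<rfloor> + 1" by linarith+
  have b: "real_of_int \<lfloor>y\<rfloor> \<le> y" "y < real_of_int \<lfloor>y\<rfloor> + 1" by linarith+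
  have "\<bar>real_of_int \<lfloor>x\<rfloor> - real_of_int \<lfloor>y\<rfloor>\<bar> \<le> \<bar>x - y\<bar> + 1"
    using a b by (simp add: abs_le_iff) linarith
  then show ?thesis by simp
qed

lemma abs_snd_le_sum: "p \<in> set w \<Longrightarrow> \<bar>snd p\<bar> \<le> (\<Sum>q\<leftarrow>w. \<bar>snd q :: real\<bar>)"
proof (induction w)
  case Nil then show ?case by simp
next
  case (Cons q w)
  have "(\<Sum>q\<leftarrow>w. \<bar>snd q\<bar>) \<ge> 0" by (rule sum_list_nonneg) auto
  then show ?case using Cons by auto
qed

context fmn begin

lemma wscale_alt: "wscale c w = map (\<lambda>p. (fst p, c * snd p)) w"
  by (simp add: wscale_def case_prod_beta')
lemma wscale_words: "w \<in> words G \<Longrightarrow> wscale c w \<in> words G"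
  by (simp add: words_def wscale_alt image_image)
lemma wscale_append: "wscale c (u @ v) = wscale c u @ wscale c v" by (simp add: wscale_alt)
lemma wscale_wscale: "wscale a (wscale b w) = wscale (a * b) w" by (simp add: wscale_alt mult.assoc)
lemma wscale_one[simp]: "wscale 1 w = w" by (simp add: wscale_alt)
lemma wbar_wscale: "wbar (wscale c w) = wscale c (wbar w)" by (simp add: wscale_alt wbar_def case_prod_beta' rev_map)
lemma wbar_rev: "wbar w = rev (wscale (-1) w)" by (simp add: wscale_alt wbar_def case_prod_beta')
lemma ev_wscale: "ev (wscale c w) n = prodl (map (\<lambda>p. (fst p, \<lfloor>c * snd p * real n\<rfloor>)) w)"
  by (simp add: ev_prodl wscale_alt comp_def mult.assoc)

lemma prodl_zero: "prodl (map (\<lambda>p. (fst p, 0)) w) = \<one>" by (induction w) auto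

lemma wnorm_scale_zero: assumes w: "w \<in> words G" shows "wnorm G nu (wscale 0 w) = 0"
  by (rule wnorm_bdd[OF wscale_words[OF w], where C=0]) (simp add: ev_wscale prodl_zero)

lemma wnorm_scale_pos: assumes w: "w \<in> words G" and c: "c > 0"
  shows "wnorm G nu (wscale c w) = c * wnorm G nu w"
proof -
  define m where "m n = nat \<lfloor>c * real n\<rfloor>" for n
  have mr: "real (m n) \<le> c * real n" "c * real n < real (m n) + 1" for n
  proof -
    have "c * real n \<ge> 0" using c by simp
    then have "real (m n) = real_of_int \<lfloor>c * real n\<rfloor>" unfolding m_def by simp
    then show "real (m n) \<le> c * real n" "c * real n < real (m n) + 1" by linarith+
  qed
  define K where "K = 1 + (\<Sum>q\<leftarrow>w. \<bar>snd q\<bar>)"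
  define C1 where "C1 = (\<Sum>p\<leftarrow>w. nu (fst p))"
  have wc: "fst ` set w \<subseteq> carrier G" using w words_iff by auto
  have db: "d (ev (wscale c w) n) (ev w (m n)) \<le> K * C1" for n
    unfolding ev_wscale unfolding ev_prodl C1_def
  proof (rule prodl_close[OF wc])
    fix p :: "'a \<times> real" assume p: "p \<in> set w"
    have "\<bar>c * snd p * real n - snd p * real (m n)\<bar> = \<bar>snd p\<bar> * \<bar>c * real n - real (m n)\<bar>"
      by (simp add: abs_mult[symmetric] algebra_simps)
    also have "\<dots> \<le> \<bar>snd p\<bar> * 1" by (rule mult_left_mono) (use mr[of n] in auto)
    finally have "real_of_int \<bar>\<lfloor>c * snd p * real n\<rfloor> - \<lfloor>snd p * real (m n)\<rfloor>\<bar> \<le> \<bar>snd p\<bar> + 1"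
      using floor_diff_bound[of "c * snd p * real n" "snd p * real (m n)"] by linarith
    then show "real_of_int \<bar>\<lfloor>c * snd p * real n\<rfloor> - \<lfloor>snd p * real (m n)\<rfloor>\<bar> \<le> K"
      unfolding K_def using abs_snd_le_sum[OF p] by linarith
  qed
  define D where "D = K * C1"
  have cw: "wscale c w \<in> words G" by (rule wscale_words[OF w])
  have nd: "\<bar>nu (ev (wscale c w) n) - nu (ev w (m n))\<bar> \<le> D" for n
  proof -
    have c1: "ev (wscale c w) n \<in> carrier G" and c2: "ev w (m n) \<in> carrier G" using cw w by auto
    have "nu (ev (wscale c w) n) \<le> d (ev (wscale c w) n) (ev w (m n)) + nu (ev w (m n))" by (rule nu_le_d[OF c1 c2])
    moreover have "nu (ev w (m n)) \<le> d (ev w (m n)) (ev (wscale c w) n) + nu (ev (wscale c w) n)" by (rule nu_le_d[OF c2 c1])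
    moreover have "d (ev w (m n)) (ev (wscale c w) n) = d (ev (wscale c w) n) (ev w (m n))" by (rule d_sym[OF c2 c1])
    ultimately show ?thesis using db[of n] unfolding D_def by linarith
  qed
  have hl: "filterlim (\<lambda>n. c * real n) at_top sequentially"
    by (rule filterlim_tendsto_pos_mult_at_top[OF tendsto_const c filterlim_real_sequentially])
  have mlim: "filterlim m sequentially sequentially"
    unfolding m_def by (rule filterlim_compose[OF filterlim_nat_sequentially filterlim_compose[OF filterlim_floor_sequentially hl]])
  have lim1: "(\<lambda>n. word_seq G nu w (m n)) \<longlonglongrightarrow> wnorm G nu w"
    by (rule filterlim_compose[OF wnorm_lim[OF w] mlim])
  have lim2: "(\<lambda>n. real (m n) / real n) \<longlonglongrightarrow> c"
  proof (rule tendsto_sandwich[of "\<lambda>n. c - 1 / real n" _ _ "\<lambda>n. c"])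
    show "\<forall>\<^sub>F n in sequentially. c - 1 / real n \<le> real (m n) / real n"
    proof (rule eventually_sequentiallyI[of 1])
      fix n :: nat assume "n \<ge> 1"
      then have np: "real n > 0" by simp
      have "c * real n - 1 \<le> real (m n)" using mr[of n] by linarith
      have "c - 1 / real n = (c * real n - 1) / real n" using np by (simp add: field_simps)
      also have "\<dots> \<le> real (m n) / real n" by (rule divide_right_mono) (use \<open>c * real n - 1 \<le> real (m n)\<close> in auto)
      finally show "c - 1 / real n \<le> real (m n) / real n" .
    qed
    show "\<forall>\<^sub>F n in sequentially. real (m n) / real n \<le> c"
    proof (rule eventually_sequentiallyI[of 1])
      fix n :: nat assume "n \<ge> 1"
      then have np: "real n > 0" by simp
      then show "real (m n) / real n \<le> c" using mr[of n] by (simp add: field_simps)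
    qed
    show "(\<lambda>n. c - 1 / real n) \<longlonglongrightarrow> c" using tendsto_diff[OF tendsto_const lim_const_over_n, of c 1] by simp
    show "(\<lambda>n. c) \<longlonglongrightarrow> c" by simp
  qed
  have X: "word_seq G nu w (m n) * (real (m n) / real n) = nu (ev w (m n)) / real n" for n
  proof (cases "m n = 0")
    case True then show ?thesis using ev_0[OF w] by (simp add: word_seq_def)
  next
    case False then show ?thesis by (simp add: word_seq_def)
  qed
  have limX: "(\<lambda>n. nu (ev w (m n)) / real n) \<longlonglongrightarrow> wnorm G nu w * c"
    using tendsto_mult[OF lim1 lim2] unfolding X .
  have limZ: "(\<lambda>n. word_seq G nu (wscale c w) n - nu (ev w (m n)) / real n) \<longlonglongrightarrow> 0"
  proof (rule tendsto_sandwich[of "\<lambda>n. - D / real n" _ _ "\<lambda>n. D / real n"])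
    have e: "word_seq G nu (wscale c w) n - nu (ev w (m n)) / real n = (nu (ev (wscale c w) n) - nu (ev w (m n))) / real n" for n
      by (simp add: word_seq_def diff_divide_distrib)
    show "\<forall>\<^sub>F n in sequentially. - D / real n \<le> word_seq G nu (wscale c w) n - nu (ev w (m n)) / real n"
      unfolding e
    proof (intro always_eventually allI)
      fix n
      have "- D \<le> nu (ev (wscale c w) n) - nu (ev w (m n))" using nd[of n] by (simp add: abs_le_iff)
      then show "- D / real n \<le> (nu (ev (wscale c w) n) - nu (ev w (m n))) / real n"
        by (rule divide_right_mono) simp
    qed
    show "\<forall>\<^sub>F n in sequentially. word_seq G nu (wscale c w) n - nu (ev w (m n)) / real n \<le> D / real n"
      unfolding e
    proof (intro always_eventually allI)
      fix n
      have "nu (ev (wscale c w) n) - nu (ev w (m n)) \<le> D" using nd[of n] by (simp add: abs_le_iff)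
      then show "(nu (ev (wscale c w) n) - nu (ev w (m n))) / real n \<le> D / real n"
        by (rule divide_right_mono) simp
    qed
    show "(\<lambda>n. - D / real n) \<longlonglongrightarrow> 0" by (rule lim_const_over_n)
    show "(\<lambda>n. D / real n) \<longlonglongrightarrow> 0" by (rule lim_const_over_n)
  qed
  have "(\<lambda>n. (word_seq G nu (wscale c w) n - nu (ev w (m n)) / real n) + nu (ev w (m n)) / real n) \<longlonglongrightarrow> 0 + wnorm G nu w * c"
    by (rule tendsto_add[OF limZ limX])
  then have "word_seq G nu (wscale c w) \<longlonglongrightarrow> wnorm G nu w * c" by simp
  then show ?thesis using LIMSEQ_unique[OF wnorm_lim[OF cw]] by (simp add: mult.commute)
qed

lemma wnorm_scale_m1: assumes w: "w \<in> words G" shows "wnorm G nu (wscale (-1) w) = wnorm G nu w"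
proof -
  have "wnorm G nu (wscale (-1) w) = wnorm G nu (wbar w)"
    by (rule wnorm_perm) (use w wscale_words wbar_words in \<open>auto simp: wbar_rev\<close>)
  then show ?thesis using wnorm_wbar[OF w] by simp
qed

lemma wnorm_scale: assumes w: "w \<in> words G" shows "wnorm G nu (wscale c w) = \<bar>c\<bar> * wnorm G nu w"
proof (cases "c > 0")
  case True then show ?thesis using wnorm_scale_pos[OF w] by simp
next
  case False
  show ?thesis
  proof (cases "c = 0")
    case True then show ?thesis using wnorm_scale_zero[OF w] by simp
  next
    case False
    then have cn: "- c > 0" using \<open>\<not> c > 0\<close> by simp
    have "wscale c w = wscale (-c) (wscale (-1) w)" by (simp add: wscale_wscale)
    then have "wnorm G nu (wscale c w) = (-c) * wnorm G nu (wscale (-1) w)"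
      using wnorm_scale_pos[OF wscale_words[OF w] cn] by simp
    then show ?thesis using wnorm_scale_m1[OF w] cn by simp
  qed
qed

end

lemma floor3_bound: assumes "x + y + z = (0::real)"
  shows "real_of_int \<bar>\<lfloor>x\<rfloor> + \<lfloor>y\<rfloor> + \<lfloor>z\<rfloor>\<bar> \<le> 2"
proof -
  have h1: "real_of_int (\<lfloor>x\<rfloor> + \<lfloor>y\<rfloor> + \<lfloor>z\<rfloor>) \<le> 0" using assms by simp linarith
  have h2: "real_of_int (\<lfloor>x\<rfloor> + \<lfloor>y\<rfloor> + \<lfloor>z\<rfloor>) > -3" using assms by simp linarith
  have "\<lfloor>x\<rfloor> + \<lfloor>y\<rfloor> + \<lfloor>z\<rfloor> \<le> 0" using h1 by linarith
  moreover have "\<lfloor>x\<rfloor> + \<lfloor>y\<rfloor> + \<lfloor>z\<rfloor> > -3" using h2 by linarith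
  ultimately have "\<bar>\<lfloor>x\<rfloor> + \<lfloor>y\<rfloor> + \<lfloor>z\<rfloor>\<bar> \<le> 2" by linarith
  then show ?thesis by linarith
qed

context fmn begin

lemma nu_drop: assumes "A \<in> carrier G" "B \<in> carrier G" "Z \<in> carrier G"
  shows "nu (A \<otimes> B) \<le> nu (A \<otimes> Z \<otimes> B) + nu Z"
proof -
  have "d (A \<otimes> B) (A \<otimes> (Z \<otimes> B)) = d B (Z \<otimes> B)" by (rule d_left) (use assms in auto)
  also have "\<dots> = d (\<one> \<otimes> B) (Z \<otimes> B)" using assms by simp
  also have "\<dots> = d \<one> Z" by (rule d_right) (use assms in auto)
  also have "\<dots> = nu Z" unfolding d_def using assms by (simp add: nu_inv)
  finally have e: "d (A \<otimes> B) (A \<otimes> Z \<otimes> B) = nu Z" using assms by (simp add: m_assoc)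
  show ?thesis using nu_le_d[of "A \<otimes> B" "A \<otimes> Z \<otimes> B"] e assms by simp
qed

lemma wrel_iff: "(g, h) \<in> wrel G nu \<longleftrightarrow> g \<in> words G \<and> h \<in> words G \<and> wnorm G nu (g @ wbar h) = 0"
  by (simp add: wrel_def)

lemma wrel_refl: "g \<in> words G \<Longrightarrow> (g, g) \<in> wrel G nu"
  using wnorm_cancel by (simp add: wrel_iff)

lemma wrel_sym: assumes "(g, h) \<in> wrel G nu" shows "(h, g) \<in> wrel G nu"
proof -
  have g: "g \<in> words G" and h: "h \<in> words G" and z: "wnorm G nu (g @ wbar h) = 0" using assms wrel_iff by auto
  have "wnorm G nu (h @ wbar g) = wnorm G nu (wbar (g @ wbar h))" by (simp add: wbar_append)
  also have "\<dots> = 0" using wnorm_wbar[OF words_append[OF g wbar_words[OF h]]] z by simp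
  finally show ?thesis using g h wrel_iff by auto
qed

lemma cancel_bound': assumes h: "h \<in> words G" shows "nu (ev (wbar h @ h) n) \<le> (\<Sum>p\<leftarrow>wbar h. nu (fst p))"
  using cancel_bound[OF wbar_words[OF h], of n] by simp

lemma wrel_trans: assumes "(g, h) \<in> wrel G nu" "(h, k) \<in> wrel G nu" shows "(g, k) \<in> wrel G nu"
proof -
  have g: "g \<in> words G" and h: "h \<in> words G" and k: "k \<in> words G"
    and z1: "wnorm G nu (g @ wbar h) = 0" and z2: "wnorm G nu (h @ wbar k) = 0" using assms wrel_iff by auto
  have hb: "wbar h \<in> words G" and kb: "wbar k \<in> words G" using h k wbar_words by auto
  have "wnorm G nu (g @ wbar k) \<le> wnorm G nu (g @ wbar h) + wnorm G nu (h @ wbar k)"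
  proof (rule wnorm_le[OF words_append[OF g kb] words_append[OF g hb] words_append[OF h kb]])
    fix n
    define Z where "Z = ev (wbar h @ h) n"
    have Zc: "Z \<in> carrier G" unfolding Z_def using hb h words_append by auto
    have "nu (ev (g @ wbar k) n) = nu (ev g n \<otimes> ev (wbar k) n)" using g kb by (simp add: ev_append)
    also have "\<dots> \<le> nu (ev g n \<otimes> Z \<otimes> ev (wbar k) n) + nu Z" by (rule nu_drop) (use g kb Zc in auto)
    also have "ev g n \<otimes> Z \<otimes> ev (wbar k) n = ev (g @ wbar h) n \<otimes> ev (h @ wbar k) n"
      unfolding Z_def using g h hb kb by (simp add: ev_append m_assoc)
    also have "nu (ev (g @ wbar h) n \<otimes> ev (h @ wbar k) n) \<le> nu (ev (g @ wbar h) n) + nu (ev (h @ wbar k) n)"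
      by (rule nu_mult) (use g h hb kb words_append in auto)
    finally show "nu (ev (g @ wbar k) n) \<le> nu (ev (g @ wbar h) n) + nu (ev (h @ wbar k) n) + (\<Sum>p\<leftarrow>wbar h. nu (fst p))"
      using cancel_bound'[OF h, of n] unfolding Z_def by linarith
  qed
  then have "wnorm G nu (g @ wbar k) = 0" using z1 z2 wnorm_nonneg[OF words_append[OF g kb]] by simp
  then show ?thesis using g k wrel_iff by auto
qed

lemma wrel_equiv: "equiv (words G) (wrel G nu)"
proof (rule equivI)
  show "wrel G nu \<subseteq> words G \<times> words G" by (auto simp: wrel_def)
  show "refl_on (words G) (wrel G nu)" unfolding refl_on_def using wrel_refl by blast
  show "sym (wrel G nu)" unfolding sym_def using wrel_sym by blast
  show "trans (wrel G nu)" unfolding trans_def using wrel_trans by blast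
qed

lemma wrel_perm: assumes "u \<in> words G" "v \<in> words G" "mset u = mset v" shows "(u, v) \<in> wrel G nu"
proof -
  have "wnorm G nu (u @ wbar v) = wnorm G nu (v @ wbar v)"
    by (rule wnorm_perm) (use assms words_append wbar_words in auto)
  then show ?thesis using wnorm_cancel[OF assms(2)] assms wrel_iff by simp
qed

lemma wrel_app: assumes "(g, g') \<in> wrel G nu" "(h, h') \<in> wrel G nu" shows "(g @ h, g' @ h') \<in> wrel G nu"
proof -
  have g: "g \<in> words G" and g': "g' \<in> words G" and z1: "wnorm G nu (g @ wbar g') = 0" using assms wrel_iff by auto
  have h: "h \<in> words G" and h': "h' \<in> words G" and z2: "wnorm G nu (h @ wbar h') = 0" using assms wrel_iff by auto
  have w1: "g @ wbar g' \<in> words G" and w2: "h @ wbar h' \<in> words G" using g g' h h' words_append wbar_words by auto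
  have "wnorm G nu ((g @ h) @ wbar (g' @ h')) = wnorm G nu ((g @ wbar g') @ (h @ wbar h'))"
    by (rule wnorm_perm) (use g g' h h' words_append wbar_words in \<open>auto simp: wbar_append\<close>)
  also have "\<dots> \<le> 0" using wnorm_append_le[OF w1 w2] z1 z2 by simp
  finally have "wnorm G nu ((g @ h) @ wbar (g' @ h')) = 0"
    using wnorm_nonneg[of "(g @ h) @ wbar (g' @ h')"] g g' h h' words_append wbar_words by force
  then show ?thesis using g g' h h' words_append wrel_iff by auto
qed

lemma wrel_scale: assumes "(g, g') \<in> wrel G nu" shows "(wscale c g, wscale c g') \<in> wrel G nu"
proof -
  have g: "g \<in> words G" and g': "g' \<in> words G" and z: "wnorm G nu (g @ wbar g') = 0" using assms wrel_iff by auto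
  have "wnorm G nu (wscale c g @ wbar (wscale c g')) = wnorm G nu (wscale c (g @ wbar g'))"
    by (simp add: wbar_wscale wscale_append)
  also have "\<dots> = 0" using wnorm_scale[OF words_append[OF g wbar_words[OF g']]] z by simp
  finally show ?thesis using g g' wscale_words wrel_iff by auto
qed

lemma wrel_wnorm: assumes "(g, g') \<in> wrel G nu" shows "wnorm G nu g = wnorm G nu g'"
proof -
  have le: "wnorm G nu a \<le> wnorm G nu b" if ab: "(a, b) \<in> wrel G nu" for a b
  proof -
    have a: "a \<in> words G" and b: "b \<in> words G" and z: "wnorm G nu (a @ wbar b) = 0" using ab wrel_iff by auto
    have bb: "wbar b \<in> words G" using b wbar_words by auto
    have "wnorm G nu a \<le> wnorm G nu (a @ wbar b) + wnorm G nu b"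
    proof (rule wnorm_le[OF a words_append[OF a bb] b])
      fix n
      define Z where "Z = ev (wbar b @ b) n"
      have Zc: "Z \<in> carrier G" unfolding Z_def using bb b words_append by auto
      have "nu (ev a n) = nu (ev a n \<otimes> \<one>)" using a by simp
      also have "\<dots> \<le> nu (ev a n \<otimes> Z \<otimes> \<one>) + nu Z" by (rule nu_drop) (use a Zc in auto)
      also have "ev a n \<otimes> Z \<otimes> \<one> = ev (a @ wbar b) n \<otimes> ev b n"
        unfolding Z_def using a b bb by (simp add: ev_append m_assoc)
      also have "nu (ev (a @ wbar b) n \<otimes> ev b n) \<le> nu (ev (a @ wbar b) n) + nu (ev b n)"
        by (rule nu_mult) (use a b bb words_append in auto)
      finally show "nu (ev a n) \<le> nu (ev (a @ wbar b) n) + nu (ev b n) + (\<Sum>p\<leftarrow>wbar b. nu (fst p))"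
        using cancel_bound'[OF b, of n] unfolding Z_def by linarith
    qed
    then show ?thesis using z by simp
  qed
  show ?thesis using le[OF assms] le[OF wrel_sym[OF assms]] by simp
qed

definition trip :: "real \<Rightarrow> real \<Rightarrow> ('a \<times> real) list \<Rightarrow> ('a \<times> real) list" where
  "trip a b w = concat (map (\<lambda>p. [(fst p, (a + b) * snd p), (fst p, - (b * snd p)), (fst p, - (a * snd p))]) w)"

lemma mset_trip: "mset (concat (map (\<lambda>p. [F p, H p, K p]) w)) = mset (map F w) + mset (map H w) + mset (map K w)"
  by (induction w) auto

lemma trip_words: "w \<in> words G \<Longrightarrow> trip a b w \<in> words G"
  unfolding trip_def words_iff by auto

lemma trip_bound: assumes w: "w \<in> words G" shows "nu (ev (trip a b w) n) \<le> 2 * (\<Sum>p\<leftarrow>w. nu (fst p))"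
  using w
proof (induction w)
  case Nil then show ?case by (simp add: trip_def)
next
  case (Cons p w)
  have gc: "fst p \<in> carrier G" and w: "w \<in> words G" using Cons.prems words_Cons by auto
  define g where "g = fst p"
  define x where "x = \<lfloor>(a + b) * snd p * real n\<rfloor>"
  define y where "y = \<lfloor>- (b * snd p) * real n\<rfloor>"
  define z where "z = \<lfloor>- (a * snd p) * real n\<rfloor>"
  define Y where "Y = ev (trip a b w) n"
  have Yc: "Y \<in> carrier G" unfolding Y_def using trip_words[OF w] by simp
  have "ev (trip a b (p # w)) n = g [^] x \<otimes> (g [^] y \<otimes> (g [^] z \<otimes> Y))"
    by (simp add: trip_def ev_Cons g_def x_def y_def z_def Y_def)
  also have "\<dots> = g [^] (x + y + z) \<otimes> Y" using gc Yc by (simp add: g_def int_pow_mult m_assoc)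
  finally have e: "ev (trip a b (p # w)) n = g [^] (x + y + z) \<otimes> Y" .
  have "nu (g [^] (x + y + z) \<otimes> Y) \<le> nu (g [^] (x + y + z)) + nu Y"
    by (rule nu_mult) (use gc Yc in \<open>auto simp: g_def\<close>)
  also have "nu (g [^] (x + y + z)) \<le> real_of_int \<bar>x + y + z\<bar> * nu g" by (rule nu_int_pow) (use gc in \<open>simp add: g_def\<close>)
  also have "\<dots> \<le> 2 * nu g"
  proof (rule mult_right_mono)
    show "real_of_int \<bar>x + y + z\<bar> \<le> 2" unfolding x_def y_def z_def
      by (rule floor3_bound) (simp add: algebra_simps)
    show "0 \<le> nu g" using gc nu_nonneg by (simp add: g_def)
  qed
  finally have "nu (ev (trip a b (p # w)) n) \<le> 2 * nu g + nu Y" unfolding e by simp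
  then show ?case using Cons.IH[OF w] unfolding Y_def g_def by (simp add: algebra_simps)
qed

lemma wrel_distrib: assumes w: "w \<in> words G"
  shows "(wscale (a + b) w, wscale a w @ wscale b w) \<in> wrel G nu"
proof -
  have w1: "wscale (a + b) w \<in> words G" and w2: "wscale a w @ wscale b w \<in> words G"
    using w wscale_words words_append by auto
  have "wnorm G nu (wscale (a + b) w @ wbar (wscale a w @ wscale b w)) = wnorm G nu (trip a b w)"
  proof (rule wnorm_perm)
    show "wscale (a + b) w @ wbar (wscale a w @ wscale b w) \<in> words G" using w1 w2 wbar_words words_append by auto
    show "trip a b w \<in> words G" by (rule trip_words[OF w])
    show "mset (wscale (a + b) w @ wbar (wscale a w @ wscale b w)) = mset (trip a b w)"
      unfolding trip_def mset_trip by (simp add: wscale_alt wbar_def case_prod_beta' comp_def algebra_simps)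
  qed
  also have "\<dots> = 0" by (rule wnorm_bdd[OF trip_words[OF w] trip_bound[OF w]])
  finally show ?thesis using w1 w2 wrel_iff by auto
qed

lemma wrel_inverse: assumes w: "w \<in> words G" shows "(w @ wscale (-1) w, []) \<in> wrel G nu"
proof -
  have w1: "w @ wscale (-1) w \<in> words G" using w wscale_words words_append by auto
  have "wnorm G nu (w @ wscale (-1) w) = wnorm G nu (w @ wbar w)"
    by (rule wnorm_perm) (use w w1 wbar_words words_append in \<open>auto simp: wbar_rev\<close>)
  then show ?thesis using wnorm_cancel[OF w] w1 wrel_iff by simp
qed

end

context fmn begin

abbreviation R where "R \<equiv> wrel G nu"
abbreviation cls where "cls a \<equiv> R `` {a}"

lemma cls_eq: "a \<in> words G \<Longrightarrow> b \<in> words G \<Longrightarrow> cls a = cls b \<longleftrightarrow> (a, b) \<in> R"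
  by (rule eq_equiv_class_iff[OF wrel_equiv])

lemma rep_props: assumes X: "X \<in> Anu G nu"
  shows "rep X \<in> words G" "cls (rep X) = X"
proof -
  obtain a where a: "a \<in> words G" and Xa: "X = cls a" using X unfolding Anu_def by (rule quotientE)
  have "a \<in> X" using equiv_class_self[OF wrel_equiv a] Xa by simp
  then have rX: "rep X \<in> X" unfolding rep_def by (rule someI)
  then have ar: "(a, rep X) \<in> R" using Xa by simp
  then show rw: "rep X \<in> words G" by (simp add: wrel_def)
  show "cls (rep X) = X" using ar Xa cls_eq[OF a rw] by simp
qed

lemma rep_cls: assumes a: "a \<in> words G" shows "(rep (cls a), a) \<in> R"
proof -
  have X: "cls a \<in> Anu G nu" unfolding Anu_def by (rule quotientI[OF a])
  have "cls (rep (cls a)) = cls a" by (rule rep_props(2)[OF X])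
  then show ?thesis using cls_eq[OF rep_props(1)[OF X] a] by simp
qed

lemma cls_in: "a \<in> words G \<Longrightarrow> cls a \<in> Anu G nu"
  unfolding Anu_def by (rule quotientI)

lemma cls_rel: "(a, b) \<in> R \<Longrightarrow> cls a = cls b"
  using cls_eq by (auto simp: wrel_def)

lemma qadd_cls: assumes a: "a \<in> words G" and b: "b \<in> words G"
  shows "qadd G nu (cls a) (cls b) = cls (a @ b)"
proof -
  have "(rep (cls a) @ rep (cls b), a @ b) \<in> R" by (rule wrel_app[OF rep_cls[OF a] rep_cls[OF b]])
  then show ?thesis unfolding qadd_def by (rule cls_rel)
qed

lemma qscale_cls: assumes a: "a \<in> words G"
  shows "qscale G nu c (cls a) = cls (wscale c a)"
proof -
  have "(wscale c (rep (cls a)), wscale c a) \<in> R" by (rule wrel_scale[OF rep_cls[OF a]])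
  then show ?thesis unfolding qscale_def by (rule cls_rel)
qed

lemma qnorm_cls: assumes a: "a \<in> words G" shows "qnorm G nu (cls a) = wnorm G nu a"
  unfolding qnorm_def by (rule wrel_wnorm[OF rep_cls[OF a]])

lemma vec_space: "real_vector_space_on (Anu G nu) (qadd G nu) (qscale G nu) (qzero G nu)"
proof -
  let ?V = "Anu G nu"
  have ex: "\<exists>a\<in>words G. X = cls a" if "X \<in> ?V" for X
    using rep_props[OF that] by metis
  have z: "qzero G nu = cls []" by (simp add: qzero_def)
  show ?thesis unfolding real_vector_space_on_def
  proof (intro conjI ballI allI)
    show "qzero G nu \<in> ?V" unfolding z by (rule cls_in) simp
  next
    fix X Y assume "X \<in> ?V" "Y \<in> ?V"
    then obtain a b where a: "a \<in> words G" "X = cls a" and b: "b \<in> words G" "Y = cls b" using ex by blast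
    show "qadd G nu X Y \<in> ?V" using a b qadd_cls cls_in words_append by auto
    show "qadd G nu X Y = qadd G nu Y X"
      using a b qadd_cls cls_rel wrel_perm words_append by (simp add: union_commute)
    fix c :: real
    show "qscale G nu c (qadd G nu X Y) = qadd G nu (qscale G nu c X) (qscale G nu c Y)"
      using a b by (simp add: qadd_cls qscale_cls words_append wscale_words wscale_append)
  next
    fix c :: real and X assume "X \<in> ?V"
    then obtain a where a: "a \<in> words G" "X = cls a" using ex by blast
    show "qscale G nu c X \<in> ?V" using a qscale_cls cls_in wscale_words by auto
  next
    fix X Y W assume "X \<in> ?V" "Y \<in> ?V" "W \<in> ?V"
    then obtain a b e where a: "a \<in> words G" "X = cls a" and b: "b \<in> words G" "Y = cls b"
      and e: "e \<in> words G" "W = cls e" using ex by metis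
    show "qadd G nu (qadd G nu X Y) W = qadd G nu X (qadd G nu Y W)"
      using a b e by (simp add: qadd_cls words_append)
  next
    fix X assume "X \<in> ?V"
    then obtain a where a: "a \<in> words G" "X = cls a" using ex by blast
    show "qadd G nu X (qzero G nu) = X" using a by (simp add: z qadd_cls)
    show "\<exists>y\<in>?V. qadd G nu X y = qzero G nu"
    proof (intro bexI)
      show "qscale G nu (-1) X \<in> ?V" using a qscale_cls cls_in wscale_words by auto
      show "qadd G nu X (qscale G nu (-1) X) = qzero G nu"
        using a wrel_inverse[OF a(1)] cls_rel by (simp add: z qscale_cls qadd_cls wscale_words)
    qed
    show "qscale G nu 1 X = X" using a by (simp add: qscale_cls)
    fix r s :: real
    show "qscale G nu (r + s) X = qadd G nu (qscale G nu r X) (qscale G nu s X)"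
      using a wrel_distrib[OF a(1)] cls_rel by (simp add: qscale_cls qadd_cls wscale_words)
    show "qscale G nu (r * s) X = qscale G nu r (qscale G nu s X)"
      using a by (simp add: qscale_cls wscale_words wscale_wscale)
  qed
qed

lemma normed_space: "real_normed_space_on (Anu G nu) (qadd G nu) (qscale G nu) (qzero G nu) (qnorm G nu)"
proof -
  let ?V = "Anu G nu"
  have ex: "\<exists>a\<in>words G. X = cls a" if "X \<in> ?V" for X
    using rep_props[OF that] by metis
  have z: "qzero G nu = cls []" by (simp add: qzero_def)
  show ?thesis unfolding real_normed_space_on_def
  proof (intro conjI ballI allI vec_space)
    fix X assume "X \<in> ?V"
    then obtain a where a: "a \<in> words G" "X = cls a" using ex by blast
    show "qnorm G nu X \<ge> 0" using a qnorm_cls wnorm_nonneg by simp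
    have "qnorm G nu X = 0 \<longleftrightarrow> (a, []) \<in> R" using a qnorm_cls by (simp add: wrel_iff)
    also have "\<dots> \<longleftrightarrow> X = qzero G nu" using a cls_eq z by simp
    finally show "qnorm G nu X = 0 \<longleftrightarrow> X = qzero G nu" .
    fix c :: real
    show "qnorm G nu (qscale G nu c X) = \<bar>c\<bar> * qnorm G nu X"
      using a by (simp add: qscale_cls qnorm_cls wscale_words wnorm_scale)
  next
    fix X Y assume "X \<in> ?V" "Y \<in> ?V"
    then obtain a b where a: "a \<in> words G" "X = cls a" and b: "b \<in> words G" "Y = cls b" using ex by blast
    show "qnorm G nu (qadd G nu X Y) \<le> qnorm G nu X + qnorm G nu Y"
      using a b wnorm_append_le[OF a(1) b(1)] by (simp add: qadd_cls qnorm_cls words_append)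
  qed
qed

lemma main: "(\<forall>w\<in>words G. convergent (word_seq G nu w))
    \<and> equiv (words G) (wrel G nu)
    \<and> (\<forall>g\<in>words G. \<forall>g'\<in>words G. \<forall>h\<in>words G. \<forall>h'\<in>words G.
          (g, g') \<in> wrel G nu \<longrightarrow> (h, h') \<in> wrel G nu \<longrightarrow> (g @ h, g' @ h') \<in> wrel G nu)
    \<and> (\<forall>c. \<forall>g\<in>words G. \<forall>g'\<in>words G.
          (g, g') \<in> wrel G nu \<longrightarrow> (wscale c g, wscale c g') \<in> wrel G nu)
    \<and> (\<forall>g\<in>words G. \<forall>g'\<in>words G. (g, g') \<in> wrel G nu \<longrightarrow> wnorm G nu g = wnorm G nu g')
    \<and> real_normed_space_on (Anu G nu) (qadd G nu) (qscale G nu) (qzero G nu) (qnorm G nu)"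
  using conv wrel_equiv wrel_app wrel_scale wrel_wnorm normed_space by blast

end

theorem proposition2p3:
  fixes G :: "('a, 'b) monoid_scheme" and \<nu> :: "'a \<Rightarrow> real"
  assumes "group G"
    and "FM G"
    and "conj_inv_pseudo_norm G \<nu>"
  shows "(\<forall>w\<in>words G. convergent (word_seq G \<nu> w))
    \<and> equiv (words G) (wrel G \<nu>)
    \<and> (\<forall>g\<in>words G. \<forall>g'\<in>words G. \<forall>h\<in>words G. \<forall>h'\<in>words G.
          (g, g') \<in> wrel G \<nu> \<longrightarrow> (h, h') \<in> wrel G \<nu> \<longrightarrow> (g @ h, g' @ h') \<in> wrel G \<nu>)
    \<and> (\<forall>c. \<forall>g\<in>words G. \<forall>g'\<in>words G.
          (g, g') \<in> wrel G \<nu> \<longrightarrow> (wscale c g, wscale c g') \<in> wrel G \<nu>)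
    \<and> (\<forall>g\<in>words G. \<forall>g'\<in>words G. (g, g') \<in> wrel G \<nu> \<longrightarrow> wnorm G \<nu> g = wnorm G \<nu> g')
    \<and> real_normed_space_on (Anu G \<nu>) (qadd G \<nu>) (qscale G \<nu>) (qzero G \<nu>) (qnorm G \<nu>)"
proof -
  interpret fmn G \<nu> by (rule fmn.intro[OF assms(1)]) (rule fmn_axioms.intro[OF assms(3,2)])
  show ?thesis by (rule main)
qed

end
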